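(* Let $R\ge 1$. For all $m\ge\mathrm{poly}(d)$, with probability at least $1-\exp(-\Omega(m^{1/3}))$ over the random initialization $a^{(0)},W^{(0)},b^{(0)}$, the following holds simultaneously for all $W\in\mathbb{R}^{d\times m}$ with $\|W-W^{(0)}\|_{2,\infty}\le R/m^{2/3}$: $$\sup_{x\in\mathcal{X}}|f_W(x)-g_W(x)|\le O\Big(\frac{R^2}{m^{1/6}}\Big).$$
   Context: $\mathcal{X}:=\{x\in\mathbb{R}^d:\|x\|_2=1,\ x_d=1/2\}$. $\sigma(z)=\max\{z,0\}$. For $W\in\mathbb{R}^{d\times m}$ with columns $W_r$: $f_W(x)=\sum_{r=1}^m a_r^{(0)}\sigma(\langle W_r,x\rangle+b_r^{(0)})$ and the pseudo-network $g_W(x)=\sum_{r=1}^m a_r^{(0)}\langle W_r-W_r^{(0)},x\rangle\,\mathbf{1}\{\langle W_r^{(0)},x\rangle+b_r^{(0)}\ge0\}$. Initialization: entries of $W^{(0)}$ and $b^{(0)}$ i.i.d. $\mathcal{N}(0,1/m)$; entries of $a^{(0)}$ i.i.d. uniform on $\{-m^{-1/3},+m^{-1/3}\}$; all independent. $\|W\|_{2,\infty}=\max_r\|W_r\|_2$ (maximum column $\ell_2$ norm). *)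

theory Defs
  imports "HOL-Probability.Probability"
begin

text \<open>Vectors in R^d are represented as functions nat => real, only the
coordinates i < d matter. A matrix W in R^{d x m} is represented by its columns:
W r is the r-th column (r < m), W r i its i-th entry (i < d).\<close>

definition inner_d :: "nat \<Rightarrow> (nat \<Rightarrow> real) \<Rightarrow> (nat \<Rightarrow> real) \<Rightarrow> real" where
  "inner_d d u v = (\<Sum>i<d. u i * v i)"

definition norm_d :: "nat \<Rightarrow> (nat \<Rightarrow> real) \<Rightarrow> real" where
  "norm_d d u = sqrt (\<Sum>i<d. (u i)\<^sup>2)"

text \<open>The input domain X = {x in R^d : ||x||_2 = 1, x_d = 1/2} (x_d is the last coordinate,
index d-1 with 0-based indexing).\<close>
definition Xset :: "nat \<Rightarrow> (nat \<Rightarrow> real) set" where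
  "Xset d = {x. norm_d d x = 1 \<and> x (d - 1) = 1/2 \<and> (\<forall>i\<ge>d. x i = 0)}"

definition relu :: "real \<Rightarrow> real" where
  "relu z = max z 0"

definition fnet :: "nat \<Rightarrow> nat \<Rightarrow> (nat \<Rightarrow> real) \<Rightarrow> (nat \<Rightarrow> real) \<Rightarrow>
    (nat \<Rightarrow> nat \<Rightarrow> real) \<Rightarrow> (nat \<Rightarrow> real) \<Rightarrow> real" where
  "fnet m d a b W x = (\<Sum>r<m. a r * relu (inner_d d (W r) x + b r))"

definition gnet :: "nat \<Rightarrow> nat \<Rightarrow> (nat \<Rightarrow> real) \<Rightarrow> (nat \<Rightarrow> real) \<Rightarrow>
    (nat \<Rightarrow> nat \<Rightarrow> real) \<Rightarrow> (nat \<Rightarrow> nat \<Rightarrow> real) \<Rightarrow> (nat \<Rightarrow> real) \<Rightarrow> real" where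
  "gnet m d a b W0 W x =
     (\<Sum>r<m. a r * inner_d d (\<lambda>i. W r i - W0 r i) x *
              (if inner_d d (W0 r) x + b r \<ge> 0 then 1 else 0))"

text \<open>||V||_{2,infty} = max column l2 norm, for m >= 1 columns.\<close>
definition norm_2inf :: "nat \<Rightarrow> nat \<Rightarrow> (nat \<Rightarrow> nat \<Rightarrow> real) \<Rightarrow> real" where
  "norm_2inf m d V = Max ((\<lambda>r. norm_d d (V r)) ` {..<m})"

definition gauss_m :: "nat \<Rightarrow> real measure" where
  "gauss_m m = density lborel (normal_density 0 (sqrt (1 / real m)))"

definition sign_m :: "nat \<Rightarrow> real measure" where
  "sign_m m = measure_pmf (pmf_of_set {- (real m powr (-1/3)), real m powr (-1/3)})"

definition init_measure :: "nat \<Rightarrow> nat \<Rightarrow>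
    ((nat \<Rightarrow> real) \<times> (nat \<Rightarrow> nat \<Rightarrow> real) \<times> (nat \<Rightarrow> real)) measure" where
  "init_measure m d =
     (PiM {..<m} (\<lambda>_. sign_m m)) \<Otimes>\<^sub>M
     ((PiM {..<m} (\<lambda>_. PiM {..<d} (\<lambda>_. gauss_m m))) \<Otimes>\<^sub>M
      (PiM {..<m} (\<lambda>_. gauss_m m)))"

end

theory Submission
  imports Defs
begin

lemma sets_gauss_m[measurable_cong, simp]: "sets (gauss_m m) = sets borel"
  unfolding gauss_m_def by simp

lemma space_gauss_m[simp]: "space (gauss_m m) = UNIV"
  unfolding gauss_m_def by simp

lemma sets_sign_m[measurable_cong, simp]: "sets (sign_m m) = sets (count_space UNIV)"
  unfolding sign_m_def by simp

lemma space_sign_m[simp]: "space (sign_m m) = UNIV"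
  unfolding sign_m_def by simp

lemma prob_gauss_m: "0 < m \<Longrightarrow> prob_space (gauss_m m)"
  unfolding gauss_m_def by (rule prob_space_normal_density) simp

lemma prob_sign_m: "prob_space (sign_m m)"
  unfolding sign_m_def by (rule prob_space_measure_pmf)

lemma meas_sign_any[measurable]: "f \<in> measurable (sign_m m) N \<longleftrightarrow> f \<in> UNIV \<rightarrow> space N"
  unfolding sign_m_def by simp

lemma nn_normal_density_1: "0 < \<sigma> \<Longrightarrow> (\<integral>\<^sup>+x. ennreal (normal_density \<mu> \<sigma> x) \<partial>lborel) = 1"
  by (subst nn_integral_eq_integral) auto

lemma normal_density_exp:
  assumes "0 < \<sigma>"
  shows "normal_density 0 \<sigma> x * exp (c*x) = exp (c\<^sup>2*\<sigma>\<^sup>2/2) * normal_density (c*\<sigma>\<^sup>2) \<sigma> x"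
proof -
  have "-(x-0)\<^sup>2/(2*\<sigma>\<^sup>2) + c*x = c\<^sup>2*\<sigma>\<^sup>2/2 + (-(x - c*\<sigma>\<^sup>2)\<^sup>2/(2*\<sigma>\<^sup>2))"
    using assms by (simp add: field_simps power2_eq_square)
  then show ?thesis unfolding normal_density_def
    by (simp add: exp_add[symmetric] mult_exp_exp)
qed

lemma gauss_mgf:
  assumes "0 < m"
  shows "(\<integral>\<^sup>+x. ennreal (exp (c*x)) \<partial>gauss_m m) = ennreal (exp (c\<^sup>2/(2*m)))"
proof -
  define \<sigma> where "\<sigma> = sqrt (1 / real m)"
  have s: "0 < \<sigma>" using assms by (simp add: \<sigma>_def)
  have s2: "\<sigma>\<^sup>2 = 1/m" using assms by (simp add: \<sigma>_def)
  have "(\<integral>\<^sup>+x. ennreal (exp (c*x)) \<partial>gauss_m m) = (\<integral>\<^sup>+x. ennreal (normal_density 0 \<sigma> x) * ennreal (exp (c*x)) \<partial>lborel)"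
    unfolding gauss_m_def \<sigma>_def by (subst nn_integral_density) auto
  also have "\<dots> = (\<integral>\<^sup>+x. ennreal (exp (c\<^sup>2*\<sigma>\<^sup>2/2)) * ennreal (normal_density (c*\<sigma>\<^sup>2) \<sigma> x) \<partial>lborel)"
    by (intro nn_integral_cong) (simp add: ennreal_mult'[symmetric] normal_density_exp[OF s])
  also have "\<dots> = ennreal (exp (c\<^sup>2*\<sigma>\<^sup>2/2))"
    by (subst nn_integral_cmult) (auto simp: nn_normal_density_1[OF s])
  finally show ?thesis using s2 by simp
qed

lemma sign_integral:
  assumes "0 < m"
  shows "(\<integral>\<^sup>+\<alpha>. f \<alpha> \<partial>sign_m m) = (f (real m powr (-1/3)) + f (- (real m powr (-1/3)))) / 2"
proof -
  have ne: "- (real m powr (-1/3)) \<noteq> real m powr (-1/3)" using assms by simp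
  show ?thesis unfolding sign_m_def
    apply (subst nn_integral_pmf_of_set)
    using ne by (auto simp: add.commute)
qed

abbreviation Wd :: "nat \<Rightarrow> nat \<Rightarrow> (nat \<Rightarrow> real) measure" where
  "Wd m d \<equiv> PiM {..<d} (\<lambda>_. gauss_m m)"

lemma pps_gauss: "0 < m \<Longrightarrow> product_prob_space (\<lambda>_::nat. gauss_m m)"
  unfolding product_prob_space_def product_prob_space_axioms_def product_sigma_finite_def
  using prob_gauss_m by (auto simp: prob_space_imp_sigma_finite)

lemma pps_sign: "product_prob_space (\<lambda>_::nat. sign_m m)"
  unfolding product_prob_space_def product_prob_space_axioms_def product_sigma_finite_def
  using prob_sign_m by (auto simp: prob_space_imp_sigma_finite)

lemma pps_Wd: "0 < m \<Longrightarrow> product_prob_space (\<lambda>_::nat. Wd m d)"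
proof -
  assume m: "0 < m"
  interpret product_prob_space "\<lambda>_::nat. gauss_m m" using pps_gauss[OF m] .
  have "prob_space (Wd m d)" by (rule prob_space_PiM) (simp add: prob_gauss_m m)
  then show ?thesis
  unfolding product_prob_space_def product_prob_space_axioms_def product_sigma_finite_def
    by (auto simp: prob_space_imp_sigma_finite)
qed

lemma Wd_mgf:
  assumes "0 < m"
  shows "(\<integral>\<^sup>+w. ennreal (exp (\<Sum>i<d. c i * w i)) \<partial>Wd m d) = ennreal (exp ((\<Sum>i<d. (c i)\<^sup>2)/(2*m)))"
proof -
  interpret product_prob_space "\<lambda>_::nat. gauss_m m" using pps_gauss[OF assms] .
  have "(\<integral>\<^sup>+w. ennreal (exp (\<Sum>i<d. c i * w i)) \<partial>Wd m d) = (\<integral>\<^sup>+w. (\<Prod>i<d. ennreal (exp (c i * w i))) \<partial>Wd m d)"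
    by (simp add: exp_sum prod_ennreal)
  also have "\<dots> = (\<Prod>i<d. (\<integral>\<^sup>+x. ennreal (exp (c i * x)) \<partial>gauss_m m))"
    by (rule product_nn_integral_prod) auto
  also have "\<dots> = (\<Prod>i<d. ennreal (exp ((c i)\<^sup>2/(2*m))))"
    using gauss_mgf[OF assms] by simp
  also have "\<dots> = ennreal (exp ((\<Sum>i<d. (c i)\<^sup>2)/(2*m)))"
    by (simp add: prod_ennreal exp_sum[symmetric] sum_divide_distrib)
  finally show ?thesis .
qed

lemma meas_a: "r < m \<Longrightarrow> (\<lambda>a. a r) \<in> borel_measurable (PiM {..<m} (\<lambda>_. sign_m m))"
  by (rule measurable_compose[OF measurable_component_singleton, where g="\<lambda>x. x"]) (auto simp: meas_sign_any)

lemma meas_b: "r < m \<Longrightarrow> (\<lambda>b. b r) \<in> borel_measurable (PiM {..<m} (\<lambda>_. gauss_m m))"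
  by measurable

lemma meas_W: "r < m \<Longrightarrow> (\<lambda>W. W r) \<in> measurable (PiM {..<m} (\<lambda>_. Wd m d)) (Wd m d)"
  by measurable

lemma init_prod:
  assumes m: "0 < m"
  assumes Fm: "\<And>r. r < m \<Longrightarrow> (\<lambda>(\<alpha>,w,\<beta>). F r \<alpha> w \<beta>) \<in> borel_measurable (borel \<Otimes>\<^sub>M (Wd m d \<Otimes>\<^sub>M borel))"
  shows "(\<integral>\<^sup>+\<omega>. (\<Prod>r<m. F r (fst \<omega> r) (fst (snd \<omega>) r) (snd (snd \<omega>) r)) \<partial>init_measure m d)
       = (\<Prod>r<m. \<integral>\<^sup>+w. \<integral>\<^sup>+\<beta>. (F r (real m powr (-1/3)) w \<beta> + F r (- (real m powr (-1/3))) w \<beta>)/2 \<partial>gauss_m m \<partial>Wd m d)"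
proof -
  define s where "s = real m powr (-1/3)"
  define A where "A = PiM {..<m} (\<lambda>_. sign_m m)"
  define WW where "WW = PiM {..<m} (\<lambda>_. Wd m d)"
  define B where "B = PiM {..<m} (\<lambda>_. gauss_m m)"
  define H where "H r w \<beta> = (F r s w \<beta> + F r (-s) w \<beta>)/2" for r w \<beta>
  define K where "K r w = (\<integral>\<^sup>+\<beta>. H r w \<beta> \<partial>gauss_m m)" for r w
  interpret pA: product_prob_space "\<lambda>_::nat. sign_m m" by (rule pps_sign)
  interpret pW: product_prob_space "\<lambda>_::nat. Wd m d" by (rule pps_Wd[OF m])
  interpret pB: product_prob_space "\<lambda>_::nat. gauss_m m" by (rule pps_gauss[OF m])
  interpret g: prob_space "gauss_m m" by (rule prob_gauss_m[OF m])
  have pA': "prob_space A" unfolding A_def by (rule prob_space_PiM) (rule prob_sign_m)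
  have pW': "prob_space WW" unfolding WW_def by (rule prob_space_PiM) (use pW.M.prob_space_axioms in auto)
  have pB': "prob_space B" unfolding B_def by (rule prob_space_PiM) (rule prob_gauss_m[OF m])
  have pWB: "prob_space (WW \<Otimes>\<^sub>M B)" by (rule prob_space_pair[OF pW' pB'])
  interpret A_WB: pair_sigma_finite A "WW \<Otimes>\<^sub>M B"
    using pA' pWB by (simp add: pair_sigma_finite_def prob_space_imp_sigma_finite)
  interpret W_B: pair_sigma_finite WW B
    using pW' pB' by (simp add: pair_sigma_finite_def prob_space_imp_sigma_finite)
  have init: "init_measure m d = A \<Otimes>\<^sub>M (WW \<Otimes>\<^sub>M B)"
    unfolding init_measure_def A_def WW_def B_def ..
  have proj: "(\<lambda>\<omega>. (fst \<omega> r, fst (snd \<omega>) r, snd (snd \<omega>) r)) \<in> measurable (A \<Otimes>\<^sub>M (WW \<Otimes>\<^sub>M B)) (borel \<Otimes>\<^sub>M (Wd m d \<Otimes>\<^sub>M borel))"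
    if r: "r < m" for r
  proof (intro measurable_Pair)
    show "(\<lambda>\<omega>. fst \<omega> r) \<in> borel_measurable (A \<Otimes>\<^sub>M (WW \<Otimes>\<^sub>M B))"
      using meas_a[OF r] unfolding A_def by measurable
    show "(\<lambda>\<omega>. fst (snd \<omega>) r) \<in> measurable (A \<Otimes>\<^sub>M (WW \<Otimes>\<^sub>M B)) (Wd m d)"
      using meas_W[OF r] unfolding WW_def by measurable
    show "(\<lambda>\<omega>. snd (snd \<omega>) r) \<in> borel_measurable (A \<Otimes>\<^sub>M (WW \<Otimes>\<^sub>M B))"
      using meas_b[OF r] unfolding B_def by measurable
  qed
  have Gm: "(\<lambda>\<omega>. \<Prod>r<m. F r (fst \<omega> r) (fst (snd \<omega>) r) (snd (snd \<omega>) r)) \<in> borel_measurable (A \<Otimes>\<^sub>M (WW \<Otimes>\<^sub>M B))"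
  proof (rule borel_measurable_prod_ennreal)
    fix r assume "r \<in> {..<m}"
    then have r: "r < m" by simp
    have "(\<lambda>\<omega>. (\<lambda>(\<alpha>,w,\<beta>). F r \<alpha> w \<beta>) (fst \<omega> r, fst (snd \<omega>) r, snd (snd \<omega>) r)) \<in> borel_measurable (A \<Otimes>\<^sub>M (WW \<Otimes>\<^sub>M B))"
      by (rule measurable_compose[OF proj[OF r] Fm[OF r]])
    then show "(\<lambda>\<omega>. F r (fst \<omega> r) (fst (snd \<omega>) r) (snd (snd \<omega>) r)) \<in> borel_measurable (A \<Otimes>\<^sub>M (WW \<Otimes>\<^sub>M B))"
      by simp
  qed
  have Hm: "(\<lambda>(w,\<beta>). H r w \<beta>) \<in> borel_measurable (Wd m d \<Otimes>\<^sub>M borel)" if r: "r < m" for r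
  proof -
    have "(\<lambda>p. (\<lambda>(\<alpha>,w,\<beta>). F r \<alpha> w \<beta>) ((\<lambda>p. (c, fst p, snd p)) p)) \<in> borel_measurable (Wd m d \<Otimes>\<^sub>M borel)" for c
      by (rule measurable_compose[OF _ Fm[OF r]]) measurable
    then show ?thesis unfolding H_def by (simp add: split_beta')
  qed
  have Hm': "(\<lambda>(w,\<beta>). H r w \<beta>) \<in> borel_measurable (Wd m d \<Otimes>\<^sub>M gauss_m m)" if r: "r < m" for r
    using Hm[OF r] by (simp cong: measurable_cong_sets)
  have Km: "K r \<in> borel_measurable (Wd m d)" if r: "r < m" for r
    unfolding K_def using sigma_finite_measure.borel_measurable_nn_integral_fst[OF prob_space_imp_sigma_finite[OF prob_gauss_m[OF m]] Hm'[OF r]] by simp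
  have step1: "(\<integral>\<^sup>+\<omega>. (\<Prod>r<m. F r (fst \<omega> r) (fst (snd \<omega>) r) (snd (snd \<omega>) r)) \<partial>init_measure m d)
     = (\<integral>\<^sup>+p. (\<integral>\<^sup>+a. (\<Prod>r<m. F r (a r) (fst p r) (snd p r)) \<partial>A) \<partial>(WW \<Otimes>\<^sub>M B))"
    unfolding init using A_WB.nn_integral_snd[OF Gm] by simp
  have step2: "(\<integral>\<^sup>+a. (\<Prod>r<m. F r (a r) (fst p r) (snd p r)) \<partial>A) = (\<Prod>r<m. H r (fst p r) (snd p r))" for p
  proof -
    have "(\<integral>\<^sup>+a. (\<Prod>r<m. F r (a r) (fst p r) (snd p r)) \<partial>A) = (\<Prod>r<m. \<integral>\<^sup>+\<alpha>. F r \<alpha> (fst p r) (snd p r) \<partial>sign_m m)"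
      unfolding A_def by (rule pA.product_nn_integral_prod) (auto simp: meas_sign_any)
    then show ?thesis by (simp add: sign_integral[OF m] H_def s_def)
  qed
  have HPm: "(\<lambda>p. \<Prod>r<m. H r (fst p r) (snd p r)) \<in> borel_measurable (WW \<Otimes>\<^sub>M B)"
  proof (rule borel_measurable_prod_ennreal)
    fix r assume "r \<in> {..<m}"
    then have r: "r < m" by simp
    have "(\<lambda>p. (fst p r, snd p r)) \<in> measurable (WW \<Otimes>\<^sub>M B) (Wd m d \<Otimes>\<^sub>M borel)"
      using meas_W[OF r] meas_b[OF r] unfolding WW_def B_def by measurable
    from measurable_compose[OF this Hm[OF r]]
    show "(\<lambda>p. H r (fst p r) (snd p r)) \<in> borel_measurable (WW \<Otimes>\<^sub>M B)" by simp
  qed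
  have step3: "(\<integral>\<^sup>+p. (\<Prod>r<m. H r (fst p r) (snd p r)) \<partial>(WW \<Otimes>\<^sub>M B))
      = (\<integral>\<^sup>+W. \<integral>\<^sup>+b. (\<Prod>r<m. H r (W r) (b r)) \<partial>B \<partial>WW)"
    using W_B.M2.nn_integral_fst[OF HPm] by simp
  have step4: "(\<integral>\<^sup>+b. (\<Prod>r<m. H r (W r) (b r)) \<partial>B) = (\<Prod>r<m. K r (W r))" if W: "W \<in> space WW" for W
    unfolding B_def K_def
  proof (rule pB.product_nn_integral_prod)
    fix r assume "r \<in> {..<m}"
    then have "W r \<in> space (Wd m d)" using W unfolding WW_def by (auto simp: space_PiM)
    then show "H r (W r) \<in> borel_measurable (gauss_m m)"
      using measurable_compose_Pair1[OF _ Hm'] \<open>r \<in> {..<m}\<close> by simp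
  qed simp
  have step5: "(\<integral>\<^sup>+W. (\<Prod>r<m. K r (W r)) \<partial>WW) = (\<Prod>r<m. \<integral>\<^sup>+w. K r w \<partial>Wd m d)"
    unfolding WW_def by (rule pW.product_nn_integral_prod) (auto intro: Km)
  have "(\<integral>\<^sup>+\<omega>. (\<Prod>r<m. F r (fst \<omega> r) (fst (snd \<omega>) r) (snd (snd \<omega>) r)) \<partial>init_measure m d)
      = (\<integral>\<^sup>+W. \<integral>\<^sup>+b. (\<Prod>r<m. H r (W r) (b r)) \<partial>B \<partial>WW)"
    using step1 step2 step3 by simp
  also have "\<dots> = (\<integral>\<^sup>+W. (\<Prod>r<m. K r (W r)) \<partial>WW)"
    by (rule nn_integral_cong) (rule step4)
  also have "\<dots> = (\<Prod>r<m. \<integral>\<^sup>+w. K r w \<partial>Wd m d)" by (rule step5)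
  finally show ?thesis unfolding K_def H_def s_def .
qed

lemma expsum_mono:
  fixes a b :: real
  assumes "\<bar>a\<bar> \<le> \<bar>b\<bar>"
  shows "exp a + exp (-a) \<le> exp b + exp (-b)"
proof -
  have c: "exp x + exp (-x) = 2 * cosh x" for x :: real by (simp add: cosh_def)
  have "cosh a = cosh \<bar>a\<bar>" "cosh b = cosh \<bar>b\<bar>" by (auto simp: abs_if)
  moreover have "cosh \<bar>a\<bar> \<le> cosh \<bar>b\<bar>" using assms by (subst cosh_real_nonneg_le_iff) auto
  ultimately show ?thesis unfolding c by simp
qed

lemma comp_any:
  assumes "\<And>j. j \<in> I \<Longrightarrow> (\<lambda>x. x) \<in> borel_measurable (M j)"
  shows "(\<lambda>x. x i) \<in> borel_measurable (PiM I M)"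
proof (cases "i \<in> I")
  case True
  have h: "(\<lambda>x. x i) \<in> measurable (PiM I M) (M i)" using True by simp
  show ?thesis by (rule measurable_compose[OF h assms[OF True]])
next
  case False
  have "(\<lambda>x. undefined) \<in> borel_measurable (PiM I M)" by simp
  then show ?thesis
    by (rule measurable_cong[THEN iffD1, rotated]) (use False in \<open>auto simp: space_PiM PiE_def extensional_def\<close>)
qed

lemma meas_Wd_comp[measurable]: "(\<lambda>w. w i) \<in> borel_measurable (Wd m d)"
  by (rule comp_any) (simp cong: measurable_cong_sets)

lemma meas_relu[measurable]: "relu \<in> borel_measurable borel"
  unfolding relu_def by measurable

lemma meas_init_a[measurable]: "(\<lambda>\<omega>. fst \<omega> r) \<in> borel_measurable (init_measure m d)"
proof -
  have "(\<lambda>a. a r) \<in> borel_measurable (PiM {..<m} (\<lambda>_. sign_m m))"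
    by (rule comp_any) (simp add: meas_sign_any)
  then show ?thesis unfolding init_measure_def by measurable
qed

lemma meas_init_b[measurable]: "(\<lambda>\<omega>. snd (snd \<omega>) r) \<in> borel_measurable (init_measure m d)"
proof -
  have "(\<lambda>a. a r) \<in> borel_measurable (PiM {..<m} (\<lambda>_. gauss_m m))"
    by (rule comp_any) (simp cong: measurable_cong_sets)
  then show ?thesis unfolding init_measure_def by measurable
qed

lemma meas_WW_comp: "(\<lambda>W. W r i) \<in> borel_measurable (PiM I (\<lambda>_. Wd m d))"
proof (cases "r \<in> I")
  case True
  have h: "(\<lambda>W. W r) \<in> measurable (PiM I (\<lambda>_. Wd m d)) (Wd m d)" using True by simp
  show ?thesis by (rule measurable_compose[OF h meas_Wd_comp])
next
  case False
  have "(\<lambda>x. undefined i) \<in> borel_measurable (PiM I (\<lambda>_. Wd m d))" by simp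
  then show ?thesis
    by (rule measurable_cong[THEN iffD1, rotated]) (use False in \<open>auto simp: space_PiM PiE_def extensional_def\<close>)
qed

lemma meas_init_W[measurable]: "(\<lambda>\<omega>. fst (snd \<omega>) r i) \<in> borel_measurable (init_measure m d)"
proof -
  have "(\<lambda>W. W r i) \<in> borel_measurable (PiM {..<m} (\<lambda>_. Wd m d))" by (rule meas_WW_comp)
  then show ?thesis unfolding init_measure_def by measurable
qed

lemma prob_init: "0 < m \<Longrightarrow> prob_space (init_measure m d)"
  unfolding init_measure_def
  by (intro prob_space_pair prob_space_PiM prob_sign_m prob_gauss_m) auto

lemma markov_helper:
  assumes "A \<in> sets M" "\<And>x. x \<in> A \<Longrightarrow> 1 \<le> f x"
  shows "emeasure M A \<le> (\<integral>\<^sup>+x. f x \<partial>M)"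
proof -
  have "emeasure M A = (\<integral>\<^sup>+x. indicator A x \<partial>M)" using assms(1) by simp
  also have "\<dots> \<le> (\<integral>\<^sup>+x. f x \<partial>M)"
    by (intro nn_integral_mono) (auto simp: indicator_def intro: assms(2))
  finally show ?thesis .
qed

lemma init_single:
  assumes m: "0 < m" and r: "r < m"
  assumes Gm: "(\<lambda>(\<alpha>,w,\<beta>). G \<alpha> w \<beta>) \<in> borel_measurable (borel \<Otimes>\<^sub>M (Wd m d \<Otimes>\<^sub>M borel))"
  shows "(\<integral>\<^sup>+\<omega>. G (fst \<omega> r) (fst (snd \<omega>) r) (snd (snd \<omega>) r) \<partial>init_measure m d)
       = (\<integral>\<^sup>+w. \<integral>\<^sup>+\<beta>. (G (real m powr (-1/3)) w \<beta> + G (- (real m powr (-1/3))) w \<beta>)/2 \<partial>gauss_m m \<partial>Wd m d)"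
proof -
  define F where "F r' \<alpha> w \<beta> = (if r' = r then G \<alpha> w \<beta> else 1)" for r' \<alpha> w \<beta>
  have Fm: "(\<lambda>(\<alpha>,w,\<beta>). F r' \<alpha> w \<beta>) \<in> borel_measurable (borel \<Otimes>\<^sub>M (Wd m d \<Otimes>\<^sub>M borel))" for r'
    using Gm unfolding F_def by (cases "r' = r") auto
  have "(\<integral>\<^sup>+\<omega>. (\<Prod>r'<m. F r' (fst \<omega> r') (fst (snd \<omega>) r') (snd (snd \<omega>) r')) \<partial>init_measure m d)
       = (\<Prod>r'<m. \<integral>\<^sup>+w. \<integral>\<^sup>+\<beta>. (F r' (real m powr (-1/3)) w \<beta> + F r' (- (real m powr (-1/3))) w \<beta>)/2 \<partial>gauss_m m \<partial>Wd m d)"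
    by (rule init_prod[OF m Fm])
  moreover have "(\<Prod>r'<m. F r' (fst \<omega> r') (fst (snd \<omega>) r') (snd (snd \<omega>) r')) = G (fst \<omega> r) (fst (snd \<omega>) r) (snd (snd \<omega>) r)" for \<omega>
    unfolding F_def using r by (simp add: prod.delta)
  moreover have "(\<Prod>r'<m. \<integral>\<^sup>+w. \<integral>\<^sup>+\<beta>. (F r' (real m powr (-1/3)) w \<beta> + F r' (- (real m powr (-1/3))) w \<beta>)/2 \<partial>gauss_m m \<partial>Wd m d)
      = (\<Prod>r'<m. if r' = r then (\<integral>\<^sup>+w. \<integral>\<^sup>+\<beta>. (G (real m powr (-1/3)) w \<beta> + G (- (real m powr (-1/3))) w \<beta>)/2 \<partial>gauss_m m \<partial>Wd m d) else 1)"
  proof (rule prod.cong[OF refl])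
    fix r' assume "r' \<in> {..<m}"
    interpret Wp: prob_space "Wd m d" by (rule prob_space_PiM) (rule prob_gauss_m[OF m])
    interpret gp: prob_space "gauss_m m" by (rule prob_gauss_m[OF m])
    show "(\<integral>\<^sup>+w. \<integral>\<^sup>+\<beta>. (F r' (real m powr (-1/3)) w \<beta> + F r' (- (real m powr (-1/3))) w \<beta>)/2 \<partial>gauss_m m \<partial>Wd m d)
      = (if r' = r then (\<integral>\<^sup>+w. \<integral>\<^sup>+\<beta>. (G (real m powr (-1/3)) w \<beta> + G (- (real m powr (-1/3))) w \<beta>)/2 \<partial>gauss_m m \<partial>Wd m d) else 1)"
      unfolding F_def using gp.emeasure_space_1 Wp.emeasure_space_1
      by (cases "r' = r") (simp_all add: one_add_one[symmetric] del: one_add_one)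
  qed
  ultimately show ?thesis using r by (simp add: prod.delta)
qed

lemma ennreal_half_double[simp]: "(x + x) / 2 = (x::ennreal)"
proof -
  have "x + x = x * 2" by (simp add: mult_2_right)
  then show ?thesis by (simp add: ennreal_mult_divide_eq)
qed

lemma bad_a:
  assumes m: "0 < m" and r: "r < m"
  shows "emeasure (init_measure m d) {\<omega> \<in> space (init_measure m d). \<bar>fst \<omega> r\<bar> \<noteq> real m powr (-1/3)} = 0"
proof -
  define s where "s = real m powr (-1/3)"
  have s: "0 < s" using m by (simp add: s_def)
  define G where "G \<alpha> (w::nat\<Rightarrow>real) (\<beta>::real) = (if \<bar>\<alpha>\<bar> \<noteq> s then 1 else 0::ennreal)" for \<alpha> w \<beta>
  have Gm: "(\<lambda>(\<alpha>,w,\<beta>). G \<alpha> w \<beta>) \<in> borel_measurable (borel \<Otimes>\<^sub>M (Wd m d \<Otimes>\<^sub>M borel))"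
    unfolding G_def by measurable
  have "emeasure (init_measure m d) {\<omega> \<in> space (init_measure m d). \<bar>fst \<omega> r\<bar> \<noteq> s}
     \<le> (\<integral>\<^sup>+\<omega>. G (fst \<omega> r) (fst (snd \<omega>) r) (snd (snd \<omega>) r) \<partial>init_measure m d)"
    by (rule markov_helper) (auto simp: G_def)
  also have "\<dots> = (\<integral>\<^sup>+w. \<integral>\<^sup>+\<beta>. (G s w \<beta> + G (-s) w \<beta>)/2 \<partial>gauss_m m \<partial>Wd m d)"
    unfolding s_def by (rule init_single[OF m r Gm])
  also have "\<dots> = 0" using s by (simp add: G_def)
  finally show ?thesis unfolding s_def by simp
qed

lemma bad_W:
  assumes m: "0 < m" and r: "r < m" and i: "i < d" and sg: "\<sigma> = 1 \<or> \<sigma> = -1"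
  shows "emeasure (init_measure m d) {\<omega> \<in> space (init_measure m d). 1 \<le> \<sigma> * fst (snd \<omega>) r i} \<le> ennreal (exp (- real m / 2))"
proof -
  define G where "G (\<alpha>::real) (w::nat\<Rightarrow>real) (\<beta>::real) = ennreal (exp (real m * (\<sigma> * w i - 1)))" for \<alpha> w \<beta>
  have Gm: "(\<lambda>(\<alpha>,w,\<beta>). G \<alpha> w \<beta>) \<in> borel_measurable (borel \<Otimes>\<^sub>M (Wd m d \<Otimes>\<^sub>M borel))"
    unfolding G_def by measurable
  interpret gp: prob_space "gauss_m m" by (rule prob_gauss_m[OF m])
  have "emeasure (init_measure m d) {\<omega> \<in> space (init_measure m d). 1 \<le> \<sigma> * fst (snd \<omega>) r i}
     \<le> (\<integral>\<^sup>+\<omega>. G (fst \<omega> r) (fst (snd \<omega>) r) (snd (snd \<omega>) r) \<partial>init_measure m d)"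
    by (rule markov_helper) (auto simp: G_def)
  also have "\<dots> = (\<integral>\<^sup>+w. \<integral>\<^sup>+\<beta>. (G (real m powr (-1/3)) w \<beta> + G (- (real m powr (-1/3))) w \<beta>)/2 \<partial>gauss_m m \<partial>Wd m d)"
    by (rule init_single[OF m r Gm])
  also have "\<dots> = (\<integral>\<^sup>+w. ennreal (exp (real m * (\<sigma> * w i - 1))) \<partial>Wd m d)"
    using gp.emeasure_space_1 by (simp add: G_def)
  also have "\<dots> = (\<integral>\<^sup>+w. ennreal (exp (- real m)) * ennreal (exp (\<Sum>j<d. (if j = i then real m * \<sigma> else 0) * w j)) \<partial>Wd m d)"
  proof (rule nn_integral_cong)
    fix w :: "nat \<Rightarrow> real"
    have "(\<Sum>j<d. (if j = i then real m * \<sigma> else 0) * w j) = (\<Sum>j<d. if j = i then real m * \<sigma> * w j else 0)"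
      by (intro sum.cong) auto
    also have "\<dots> = real m * \<sigma> * w i" using i by simp
    finally have "(\<Sum>j<d. (if j = i then real m * \<sigma> else 0) * w j) = real m * \<sigma> * w i" .
    then show "ennreal (exp (real m * (\<sigma> * w i - 1))) = ennreal (exp (- real m)) * ennreal (exp (\<Sum>j<d. (if j = i then real m * \<sigma> else 0) * w j))"
      by (simp add: ennreal_mult'[symmetric] exp_add[symmetric] algebra_simps)
  qed
  also have "\<dots> = ennreal (exp (- real m)) * ennreal (exp ((\<Sum>j<d. (if j = i then real m * \<sigma> else 0)\<^sup>2)/(2*m)))"
    by (subst nn_integral_cmult) (simp_all add: Wd_mgf[OF m])
  also have "\<dots> = ennreal (exp (- real m / 2))"
  proof -
    have "(\<Sum>j<d. (if j = i then real m * \<sigma> else 0)\<^sup>2) = (\<Sum>j<d. if j = i then (real m * \<sigma>)\<^sup>2 else 0)"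
      by (intro sum.cong) auto
    also have "\<dots> = (real m)\<^sup>2" using i sg by (auto simp: power2_eq_square)
    finally have "(\<Sum>j<d. (if j = i then real m * \<sigma> else 0)\<^sup>2) = (real m)\<^sup>2" .
    then have "exp (- real m) * exp ((\<Sum>j<d. (if j = i then real m * \<sigma> else 0)\<^sup>2)/(2*m)) = exp (- real m / 2)"
      using m by (simp add: exp_add[symmetric] power2_eq_square field_simps)
    then show ?thesis by (simp add: ennreal_mult'[symmetric])
  qed
  finally show ?thesis .
qed

lemma gauss_interval:
  assumes m: "0 < m" and ab: "a \<le> b"
  shows "emeasure (gauss_m m) {a..b} \<le> ennreal ((b - a) * sqrt m / 2)"
proof -
  define \<sigma> where "\<sigma> = sqrt (1 / real m)"
  have bd: "normal_density 0 \<sigma> x \<le> sqrt m / 2" for x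
  proof -
    have "normal_density 0 \<sigma> x \<le> 1 / sqrt (2 * pi * \<sigma>\<^sup>2)"
      unfolding normal_density_def by (simp, intro divide_right_mono) auto
    also have "\<sigma>\<^sup>2 = 1 / real m" using m by (simp add: \<sigma>_def)
    also have "1 / sqrt (2 * pi * (1 / real m)) = sqrt m / sqrt (2 * pi)"
      using m by (simp add: real_sqrt_divide field_simps real_sqrt_mult)
    also have "\<dots> \<le> sqrt m / 2"
    proof -
      have "2 \<le> sqrt (2 * pi)" using pi_gt3 by (simp add: real_le_rsqrt)
      then show ?thesis by (intro divide_left_mono) auto
    qed
    finally show ?thesis .
  qed
  have "emeasure (gauss_m m) {a..b} = (\<integral>\<^sup>+x\<in>{a..b}. ennreal (normal_density 0 \<sigma> x) \<partial>lborel)"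
    unfolding gauss_m_def \<sigma>_def by (subst emeasure_density) auto
  also have "\<dots> \<le> (\<integral>\<^sup>+x. ennreal (sqrt m / 2) * indicator {a..b} x \<partial>lborel)"
  proof (intro nn_integral_mono)
    fix x
    have "ennreal (normal_density 0 \<sigma> x) \<le> ennreal (sqrt m / 2)" by (rule ennreal_leI[OF bd])
    then show "ennreal (normal_density 0 \<sigma> x) * indicator {a..b} x \<le> ennreal (sqrt m / 2) * indicator {a..b} x"
      by (auto simp: indicator_def)
  qed
  also have "\<dots> = ennreal (sqrt m / 2) * ennreal (b - a)"
    using ab by (subst nn_integral_cmult) auto
  also have "\<dots> = ennreal ((b - a) * sqrt m / 2)"
    using ab by (simp add: ennreal_mult'[symmetric] mult.commute)
  finally show ?thesis .
qed

lemma ennreal_avg: "0 \<le> a \<Longrightarrow> 0 \<le> b \<Longrightarrow> ennreal ((a+b)/2) = (ennreal a + ennreal b)/2"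
  by (metis add_increasing ennreal_divide_numeral ennreal_plus)

lemma ennreal_pm: "0 \<le> x \<Longrightarrow> 0 \<le> y \<Longrightarrow> 0 \<le> z \<Longrightarrow> 0 \<le> w \<Longrightarrow>
   ennreal (x*y + z*w) = ennreal x * ennreal y + ennreal z * ennreal w"
  by (simp add: ennreal_plus ennreal_mult)

lemma meas_gauss_iff: "f \<in> measurable (gauss_m m) N \<longleftrightarrow> f \<in> measurable borel N"
  using measurable_cong_sets[of "gauss_m m" borel N N] by simp

lemma mg_exp: "(\<lambda>\<beta>. ennreal (exp (k*\<beta>))) \<in> borel_measurable (gauss_m m)"
  unfolding meas_gauss_iff by simp

lemma mg_exp_neg: "(\<lambda>\<beta>. ennreal (exp (-(k*\<beta>)))) \<in> borel_measurable (gauss_m m)"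
  unfolding meas_gauss_iff by simp

lemma mg_exp2: "(\<lambda>\<beta>. ennreal a * ennreal (exp (k*\<beta>))) \<in> borel_measurable (gauss_m m)"
  unfolding meas_gauss_iff by simp

lemma mW_exp: "(\<lambda>w. ennreal a * ennreal (exp (\<Sum>i<d. k i * w i))) \<in> borel_measurable (Wd m d)"
  by measurable

lemma mW_exp1: "(\<lambda>w. ennreal (exp (\<Sum>i<d. k i * w i))) \<in> borel_measurable (Wd m d)"
  by measurable

lemma swap_half: "0 \<le> a \<Longrightarrow> 0 \<le> (E::real) \<Longrightarrow> ennreal (a/2) * ennreal E = ennreal (E/2) * ennreal a"
  by (metis ennreal_mult'' mult.commute times_divide_eq_left)

lemma pt_lemma:
  "(ennreal (exp (c * relu (q + \<beta>))) + ennreal (exp (- c * relu (q + \<beta>))))/2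
      \<le> ennreal (exp (c*q)/2) * ennreal (exp (c*\<beta>)) + ennreal (exp (-c*q)/2) * ennreal (exp ((-c)*\<beta>))"
proof -
  have "\<bar>c * relu (q + \<beta>)\<bar> \<le> \<bar>c * (q + \<beta>)\<bar>"
    by (auto simp: relu_def abs_mult intro!: mult_left_mono)
  then have 1: "exp (c * relu (q + \<beta>)) + exp (- (c * relu (q + \<beta>))) \<le> exp (c * (q + \<beta>)) + exp (- (c * (q + \<beta>)))"
    by (rule expsum_mono)
  have e1: "exp (c*q)/2 * exp (c*\<beta>) + exp (-c*q)/2 * exp ((-c)*\<beta>) = (exp (c * (q + \<beta>)) + exp (- (c * (q + \<beta>))))/(2::real)"
    by (simp add: distrib_left exp_add exp_diff exp_minus field_simps)
  have "(exp (c * relu (q + \<beta>)) + exp (- c * relu (q + \<beta>)))/2 \<le> exp (c*q)/2 * exp (c*\<beta>) + exp (-c*q)/2 * exp ((-c)*\<beta>)"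
    unfolding e1 using 1 by simp
  then have "ennreal ((exp (c * relu (q + \<beta>)) + exp (- c * relu (q + \<beta>)))/2) \<le> ennreal (exp (c*q)/2 * exp (c*\<beta>) + exp (-c*q)/2 * exp ((-c)*\<beta>))"
    by (rule ennreal_leI)
  then show ?thesis
    by (subst (asm) ennreal_avg, simp, simp, subst (asm) ennreal_pm, simp_all)
qed

lemma T_factor:
  assumes m: "0 < m"
  shows "(\<integral>\<^sup>+w. \<integral>\<^sup>+\<beta>. (ennreal (exp (c * relu (inner_d d w y + \<beta>))) + ennreal (exp (- c * relu (inner_d d w y + \<beta>))))/2 \<partial>gauss_m m \<partial>Wd m d)
     \<le> ennreal (exp (c\<^sup>2 * ((\<Sum>i<d. (y i)\<^sup>2) + 1) / (2*m)))"
proof -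
  define E where "E = exp (c\<^sup>2/(2*m))"
  define Y where "Y = (\<Sum>i<d. (y i)\<^sup>2)"
  have E0: "0 \<le> E" by (simp add: E_def)
  have inner: "(\<integral>\<^sup>+\<beta>. ennreal (exp (c*q)/2) * ennreal (exp (c*\<beta>)) + ennreal (exp (-c*q)/2) * ennreal (exp ((-c)*\<beta>)) \<partial>gauss_m m)
     = ennreal (exp (c*q)/2) * ennreal E + ennreal (exp (-c*q)/2) * ennreal E" for q
  proof -
    have "(\<integral>\<^sup>+\<beta>. ennreal (exp (c*q)/2) * ennreal (exp (c*\<beta>)) + ennreal (exp (-c*q)/2) * ennreal (exp ((-c)*\<beta>)) \<partial>gauss_m m)
      = (\<integral>\<^sup>+\<beta>. ennreal (exp (c*q)/2) * ennreal (exp (c*\<beta>)) \<partial>gauss_m m) + (\<integral>\<^sup>+\<beta>. ennreal (exp (-c*q)/2) * ennreal (exp ((-c)*\<beta>)) \<partial>gauss_m m)"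
      by (rule nn_integral_add) (rule mg_exp2)+
    also have "\<dots> = ennreal (exp (c*q)/2) * (\<integral>\<^sup>+\<beta>. ennreal (exp (c*\<beta>)) \<partial>gauss_m m) + ennreal (exp (-c*q)/2) * (\<integral>\<^sup>+\<beta>. ennreal (exp ((-c)*\<beta>)) \<partial>gauss_m m)"
      by (simp add: nn_integral_cmult mg_exp mg_exp_neg)
    also have "\<dots> = ennreal (exp (c*q)/2) * ennreal E + ennreal (exp (-c*q)/2) * ennreal E"
      by (simp only: gauss_mgf[OF m] E_def power2_minus)
    finally show ?thesis .
  qed
  have iv: "inner_d d w y = (\<Sum>i<d. y i * w i)" for w by (simp add: inner_d_def mult.commute)
  have "(\<integral>\<^sup>+w. \<integral>\<^sup>+\<beta>. (ennreal (exp (c * relu (inner_d d w y + \<beta>))) + ennreal (exp (- c * relu (inner_d d w y + \<beta>))))/2 \<partial>gauss_m m \<partial>Wd m d)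
     \<le> (\<integral>\<^sup>+w. \<integral>\<^sup>+\<beta>. ennreal (exp (c*inner_d d w y)/2) * ennreal (exp (c*\<beta>)) + ennreal (exp (-c*inner_d d w y)/2) * ennreal (exp ((-c)*\<beta>)) \<partial>gauss_m m \<partial>Wd m d)"
    by (intro nn_integral_mono) (rule pt_lemma)
  also have "\<dots> = (\<integral>\<^sup>+w. ennreal (E/2) * ennreal (exp (\<Sum>i<d. (c * y i) * w i)) + ennreal (E/2) * ennreal (exp (\<Sum>i<d. (-c * y i) * w i)) \<partial>Wd m d)"
  proof (rule nn_integral_cong)
    fix w :: "nat \<Rightarrow> real"
    have h1: "c * inner_d d w y = (\<Sum>i<d. (c * y i) * w i)" by (simp add: iv sum_distrib_left mult.assoc)
    have h2: "-c * inner_d d w y = (\<Sum>i<d. (-c * y i) * w i)" by (simp add: iv sum_distrib_left mult.assoc)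
    show "(\<integral>\<^sup>+\<beta>. ennreal (exp (c*inner_d d w y)/2) * ennreal (exp (c*\<beta>)) + ennreal (exp (-c*inner_d d w y)/2) * ennreal (exp ((-c)*\<beta>)) \<partial>gauss_m m)
      = ennreal (E/2) * ennreal (exp (\<Sum>i<d. (c * y i) * w i)) + ennreal (E/2) * ennreal (exp (\<Sum>i<d. (-c * y i) * w i))"
      unfolding inner h1[symmetric] h2[symmetric] using E0
      by (simp only: swap_half exp_ge_zero)
  qed
  also have "\<dots> = ennreal (E/2) * ennreal (exp ((\<Sum>i<d. (c * y i)\<^sup>2)/(2*m))) + ennreal (E/2) * ennreal (exp ((\<Sum>i<d. (-c * y i)\<^sup>2)/(2*m)))"
    by (simp only: nn_integral_add[OF mW_exp mW_exp] nn_integral_cmult[OF mW_exp1] Wd_mgf[OF m])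
  also have "\<dots> = ennreal (exp (c\<^sup>2 * (Y + 1) / (2*m)))"
  proof -
    have s1: "(\<Sum>i<d. (-c * y i)\<^sup>2) = c\<^sup>2 * Y" "(\<Sum>i<d. (c * y i)\<^sup>2) = c\<^sup>2 * Y"
      by (simp_all add: Y_def sum_distrib_left power_mult_distrib)
    have s2: "E/2 * exp (c\<^sup>2 * Y/(2*m)) + E/2 * exp (c\<^sup>2 * Y/(2*m)) = exp (c\<^sup>2 * (Y + 1) / (2*m))"
      unfolding E_def by (simp add: exp_add[symmetric] add_divide_distrib algebra_simps)
    show ?thesis unfolding s1 s2[symmetric] using E0
      by (subst ennreal_pm) simp_all
  qed
  finally show ?thesis unfolding Y_def .
qed

definition Tf :: "nat \<Rightarrow> nat \<Rightarrow> (nat \<Rightarrow> real) \<Rightarrow> ((nat \<Rightarrow> real) \<times> (nat \<Rightarrow> nat \<Rightarrow> real) \<times> (nat \<Rightarrow> real)) \<Rightarrow> real" where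
  "Tf m d y \<omega> = (\<Sum>r<m. fst \<omega> r * relu (inner_d d (fst (snd \<omega>) r) y + snd (snd \<omega>) r))"

lemma meas_Tf[measurable]: "Tf m d y \<in> borel_measurable (init_measure m d)"
  unfolding Tf_def inner_d_def by measurable

lemma powr_facts:
  assumes m: "0 < m"
  shows "(real m powr (-1/3))\<^sup>2 * real m powr (2/3) = 1"
proof -
  have "(real m powr (-1/3))\<^sup>2 = real m powr (-2/3)"
    using m by (simp add: power2_eq_square powr_add[symmetric])
  then show ?thesis using m by (simp add: powr_add[symmetric])
qed

lemma bad_T:
  assumes m: "0 < m" and y: "(\<Sum>i<d. (y i)\<^sup>2) \<le> 4" and t: "0 \<le> t" and sg: "\<sigma> = 1 \<or> \<sigma> = -1"
  shows "emeasure (init_measure m d) {\<omega> \<in> space (init_measure m d). t \<le> \<sigma> * Tf m d y \<omega>}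
           \<le> ennreal (exp (- (t\<^sup>2 * real m powr (2/3)) / 10))"
proof -
  define P where "P = real m powr (2/3)"
  define s where "s = real m powr (-1/3)"
  define lam where "lam = t * P / 5"
  define c where "c = lam * \<sigma> * s"
  have P0: "0 < P" using m by (simp add: P_def)
  have sP: "s\<^sup>2 * P = 1" unfolding s_def P_def by (rule powr_facts[OF m])
  have lam0: "0 \<le> lam" using t P0 by (simp add: lam_def)
  have c2: "c\<^sup>2 = lam\<^sup>2 * s\<^sup>2" using sg by (auto simp: c_def power_mult_distrib)
  define F where "F r \<alpha> w \<beta> = ennreal (exp (lam * \<sigma> * \<alpha> * relu (inner_d d w y + \<beta>)))" for r :: nat and \<alpha> w \<beta>
  have Fm: "(\<lambda>(\<alpha>,w,\<beta>). F r \<alpha> w \<beta>) \<in> borel_measurable (borel \<Otimes>\<^sub>M (Wd m d \<Otimes>\<^sub>M borel))" for r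
    unfolding F_def inner_d_def by measurable
  have "emeasure (init_measure m d) {\<omega> \<in> space (init_measure m d). t \<le> \<sigma> * Tf m d y \<omega>}
     \<le> (\<integral>\<^sup>+\<omega>. ennreal (exp (lam * (\<sigma> * Tf m d y \<omega> - t))) \<partial>init_measure m d)"
  proof (rule markov_helper)
    show "{\<omega> \<in> space (init_measure m d). t \<le> \<sigma> * Tf m d y \<omega>} \<in> sets (init_measure m d)" by measurable
    fix \<omega> assume "\<omega> \<in> {\<omega> \<in> space (init_measure m d). t \<le> \<sigma> * Tf m d y \<omega>}"
    then have "0 \<le> lam * (\<sigma> * Tf m d y \<omega> - t)" using lam0 by simp
    then show "1 \<le> ennreal (exp (lam * (\<sigma> * Tf m d y \<omega> - t)))" by simp
  qed
  also have "\<dots> = (\<integral>\<^sup>+\<omega>. ennreal (exp (- lam * t)) * (\<Prod>r<m. F r (fst \<omega> r) (fst (snd \<omega>) r) (snd (snd \<omega>) r)) \<partial>init_measure m d)"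
  proof (rule nn_integral_cong)
    fix \<omega> :: "(nat \<Rightarrow> real) \<times> (nat \<Rightarrow> nat \<Rightarrow> real) \<times> (nat \<Rightarrow> real)"
    have "lam * (\<sigma> * Tf m d y \<omega> - t) = - lam * t + (\<Sum>r<m. lam * \<sigma> * fst \<omega> r * relu (inner_d d (fst (snd \<omega>) r) y + snd (snd \<omega>) r))"
      by (simp add: Tf_def sum_distrib_left algebra_simps)
    then have e: "exp (lam * (\<sigma> * Tf m d y \<omega> - t)) = exp (- lam * t) * (\<Prod>r<m. exp (lam * \<sigma> * fst \<omega> r * relu (inner_d d (fst (snd \<omega>) r) y + snd (snd \<omega>) r)))"
      by (simp only: exp_add exp_sum[OF finite_lessThan])
    show "ennreal (exp (lam * (\<sigma> * Tf m d y \<omega> - t))) = ennreal (exp (- lam * t)) * (\<Prod>r<m. F r (fst \<omega> r) (fst (snd \<omega>) r) (snd (snd \<omega>) r))"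
      unfolding e F_def by (simp add: prod_ennreal ennreal_mult')
  qed
  also have "\<dots> = ennreal (exp (- lam * t)) * (\<integral>\<^sup>+\<omega>. (\<Prod>r<m. F r (fst \<omega> r) (fst (snd \<omega>) r) (snd (snd \<omega>) r)) \<partial>init_measure m d)"
    by (rule nn_integral_cmult) (unfold F_def inner_d_def, measurable)
  also have "\<dots> = ennreal (exp (- lam * t)) * (\<Prod>r<m. \<integral>\<^sup>+w. \<integral>\<^sup>+\<beta>. (F r s w \<beta> + F r (-s) w \<beta>)/2 \<partial>gauss_m m \<partial>Wd m d)"
    unfolding s_def by (subst init_prod[OF m Fm]) (rule refl)
  also have "\<dots> \<le> ennreal (exp (- lam * t)) * (\<Prod>r<m. ennreal (exp (5 * c\<^sup>2 / (2*m))))"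
  proof (intro mult_left_mono prod_mono_ennreal)
    fix r assume "r \<in> {..<m}"
    have "(\<integral>\<^sup>+w. \<integral>\<^sup>+\<beta>. (F r s w \<beta> + F r (-s) w \<beta>)/2 \<partial>gauss_m m \<partial>Wd m d)
       = (\<integral>\<^sup>+w. \<integral>\<^sup>+\<beta>. (ennreal (exp (c * relu (inner_d d w y + \<beta>))) + ennreal (exp (- c * relu (inner_d d w y + \<beta>))))/2 \<partial>gauss_m m \<partial>Wd m d)"
      unfolding F_def c_def by (simp add: mult.assoc)
    also have "\<dots> \<le> ennreal (exp (c\<^sup>2 * ((\<Sum>i<d. (y i)\<^sup>2) + 1) / (2*m)))"
      by (rule T_factor[OF m])
    also have "\<dots> \<le> ennreal (exp (5 * c\<^sup>2 / (2*m)))"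
    proof -
      have "c\<^sup>2 * ((\<Sum>i<d. (y i)\<^sup>2) + 1) \<le> c\<^sup>2 * 5" using y by (intro mult_left_mono) auto
      then show ?thesis using m by (intro ennreal_leI) (auto intro!: divide_right_mono simp: mult.commute)
    qed
    finally show "(\<integral>\<^sup>+w. \<integral>\<^sup>+\<beta>. (F r s w \<beta> + F r (-s) w \<beta>)/2 \<partial>gauss_m m \<partial>Wd m d) \<le> ennreal (exp (5 * c\<^sup>2 / (2*m)))" .
  qed simp
  also have "\<dots> = ennreal (exp (- (t\<^sup>2 * real m powr (2/3)) / 10))"
  proof -
    have "(\<Prod>r<m. ennreal (exp (5 * c\<^sup>2 / (2*m)))) = ennreal (exp (5 * c\<^sup>2 / 2))"
    proof -
      have "(\<Prod>r<m. ennreal (exp (5 * c\<^sup>2 / (2*m)))) = ennreal ((exp (5 * c\<^sup>2 / (2*m))) ^ m)"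
        by (simp add: ennreal_power)
      also have "(exp (5 * c\<^sup>2 / (2*m))) ^ m = exp (real m * (5 * c\<^sup>2 / (2*m)))"
        by (rule exp_of_nat_mult[symmetric])
      also have "real m * (5 * c\<^sup>2 / (2*m)) = 5 * c\<^sup>2 / 2" using m by simp
      finally show ?thesis .
    qed
    moreover have "- lam * t + 5 * c\<^sup>2 / 2 = - (t\<^sup>2 * real m powr (2/3)) / 10"
    proof -
      have "5 * c\<^sup>2 / 2 = t\<^sup>2 * P * (s\<^sup>2 * P) / 10" unfolding c2 lam_def by (simp add: power2_eq_square)
      then have h: "5 * c\<^sup>2 / 2 = t\<^sup>2 * P / 10" using sP by simp
      show ?thesis unfolding P_def[symmetric] h unfolding lam_def by (simp add: power2_eq_square field_simps)
    qed
    ultimately show ?thesis by (simp add: ennreal_mult[symmetric] exp_add[symmetric])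
  qed
  finally show ?thesis .
qed

definition Nf :: "nat \<Rightarrow> nat \<Rightarrow> (nat \<Rightarrow> real) \<Rightarrow> real \<Rightarrow> ((nat \<Rightarrow> real) \<times> (nat \<Rightarrow> nat \<Rightarrow> real) \<times> (nat \<Rightarrow> real)) \<Rightarrow> real" where
  "Nf m d y \<delta> \<omega> = (\<Sum>r<m. if \<bar>inner_d d (fst (snd \<omega>) r) y + snd (snd \<omega>) r\<bar> \<le> \<delta> then 1 else 0)"

lemma meas_Nf[measurable]: "Nf m d y \<delta> \<in> borel_measurable (init_measure m d)"
  unfolding Nf_def inner_d_def by measurable

lemma N_beta:
  assumes m: "0 < m" and \<delta>: "0 \<le> \<delta>"
  shows "(\<integral>\<^sup>+\<beta>. ennreal (exp (if \<bar>q + \<beta>\<bar> \<le> \<delta> then 1 else 0)) \<partial>gauss_m m) \<le> ennreal (exp (2 * \<delta> * sqrt m))"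
proof -
  interpret gp: prob_space "gauss_m m" by (rule prob_gauss_m[OF m])
  have e3: "exp (1::real) \<le> 3" using exp_le by simp
  have "(\<integral>\<^sup>+\<beta>. ennreal (exp (if \<bar>q + \<beta>\<bar> \<le> \<delta> then 1 else 0)) \<partial>gauss_m m)
     \<le> (\<integral>\<^sup>+\<beta>. 1 + 2 * indicator {-q-\<delta>..-q+\<delta>} \<beta> \<partial>gauss_m m)"
  proof (intro nn_integral_mono)
    fix \<beta>
    show "ennreal (exp (if \<bar>q + \<beta>\<bar> \<le> \<delta> then 1 else 0)) \<le> 1 + 2 * indicator {-q-\<delta>..-q+\<delta>} \<beta>"
    proof (cases "\<bar>q + \<beta>\<bar> \<le> \<delta>")
      case True
      then have "\<beta> \<in> {-q-\<delta>..-q+\<delta>}" by auto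
      moreover have "ennreal (exp 1) \<le> ennreal 3" using e3 by (rule ennreal_leI)
      ultimately show ?thesis using True by (simp add: indicator_def)
    next
      case False
      then show ?thesis by simp
    qed
  qed
  also have "\<dots> = 1 + 2 * emeasure (gauss_m m) {-q-\<delta>..-q+\<delta>}"
  proof -
    have mi: "(\<lambda>\<beta>. 2 * indicator {a..b} \<beta> :: ennreal) \<in> borel_measurable (gauss_m m)" for a b :: real
      unfolding meas_gauss_iff by simp
    have "(\<integral>\<^sup>+\<beta>. 1 + 2 * indicator {-q-\<delta>..-q+\<delta>} \<beta> \<partial>gauss_m m) = (\<integral>\<^sup>+\<beta>. 1 \<partial>gauss_m m) + (\<integral>\<^sup>+\<beta>. 2 * indicator {-q-\<delta>..-q+\<delta>} \<beta> \<partial>gauss_m m)"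
      by (rule nn_integral_add) (auto intro: mi)
    also have "(\<integral>\<^sup>+\<beta>. 2 * indicator {-q-\<delta>..-q+\<delta>} \<beta> \<partial>gauss_m m) = 2 * emeasure (gauss_m m) {-q-\<delta>..-q+\<delta>}"
      by (rule nn_integral_cmult_indicator) simp
    also have "(\<integral>\<^sup>+\<beta>. 1 \<partial>gauss_m m) = 1" using gp.emeasure_space_1 by simp
    finally show ?thesis .
  qed
  also have "\<dots> \<le> 1 + 2 * ennreal ((2*\<delta>) * sqrt m / 2)"
    using gauss_interval[OF m, of "-q-\<delta>" "-q+\<delta>"] \<delta> by (intro add_left_mono mult_left_mono) auto
  also have "\<dots> = ennreal (1 + 2 * \<delta> * sqrt m)"
  proof -
    have "ennreal (1 + 2 * \<delta> * sqrt m) = ennreal 1 + ennreal (2 * (\<delta> * sqrt m))"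
      using \<delta> by (subst ennreal_plus) (auto simp: mult.assoc)
    also have "ennreal (2 * (\<delta> * sqrt m)) = ennreal 2 * ennreal (\<delta> * sqrt m)"
      by (rule ennreal_mult') simp
    finally show ?thesis by simp
  qed
  also have "\<dots> \<le> ennreal (exp (2 * \<delta> * sqrt m))"
    by (intro ennreal_leI) (metis add.commute exp_ge_add_one_self)
  finally show ?thesis .
qed

lemma bad_N:
  assumes m: "0 < m" and \<delta>: "0 \<le> \<delta>"
  shows "emeasure (init_measure m d) {\<omega> \<in> space (init_measure m d). t \<le> Nf m d y \<delta> \<omega>}
           \<le> ennreal (exp (- t + 2 * \<delta> * real m * sqrt m))"
proof -
  define F where "F r \<alpha> w \<beta> = ennreal (exp (if \<bar>inner_d d w y + \<beta>\<bar> \<le> \<delta> then 1 else 0))" for r :: nat and \<alpha> :: real and w \<beta>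
  have Fm: "(\<lambda>(\<alpha>,w,\<beta>). F r \<alpha> w \<beta>) \<in> borel_measurable (borel \<Otimes>\<^sub>M (Wd m d \<Otimes>\<^sub>M borel))" for r
    unfolding F_def inner_d_def by measurable
  interpret Wp: prob_space "Wd m d" by (rule prob_space_PiM) (rule prob_gauss_m[OF m])
  have "emeasure (init_measure m d) {\<omega> \<in> space (init_measure m d). t \<le> Nf m d y \<delta> \<omega>}
     \<le> (\<integral>\<^sup>+\<omega>. ennreal (exp (Nf m d y \<delta> \<omega> - t)) \<partial>init_measure m d)"
  proof (rule markov_helper)
    show "{\<omega> \<in> space (init_measure m d). t \<le> Nf m d y \<delta> \<omega>} \<in> sets (init_measure m d)" by measurable
    fix \<omega> assume "\<omega> \<in> {\<omega> \<in> space (init_measure m d). t \<le> Nf m d y \<delta> \<omega>}"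
    then show "1 \<le> ennreal (exp (Nf m d y \<delta> \<omega> - t))" by simp
  qed
  also have "\<dots> = (\<integral>\<^sup>+\<omega>. ennreal (exp (- t)) * (\<Prod>r<m. F r (fst \<omega> r) (fst (snd \<omega>) r) (snd (snd \<omega>) r)) \<partial>init_measure m d)"
  proof (rule nn_integral_cong)
    fix \<omega> :: "(nat \<Rightarrow> real) \<times> (nat \<Rightarrow> nat \<Rightarrow> real) \<times> (nat \<Rightarrow> real)"
    have "Nf m d y \<delta> \<omega> - t = - t + (\<Sum>r<m. if \<bar>inner_d d (fst (snd \<omega>) r) y + snd (snd \<omega>) r\<bar> \<le> \<delta> then 1 else 0)"
      by (simp add: Nf_def)
    then have e: "exp (Nf m d y \<delta> \<omega> - t) = exp (- t) * (\<Prod>r<m. exp (if \<bar>inner_d d (fst (snd \<omega>) r) y + snd (snd \<omega>) r\<bar> \<le> \<delta> then 1 else 0))"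
      by (simp only: exp_add exp_sum[OF finite_lessThan])
    show "ennreal (exp (Nf m d y \<delta> \<omega> - t)) = ennreal (exp (- t)) * (\<Prod>r<m. F r (fst \<omega> r) (fst (snd \<omega>) r) (snd (snd \<omega>) r))"
      unfolding e F_def by (simp add: prod_ennreal ennreal_mult')
  qed
  also have "\<dots> = ennreal (exp (- t)) * (\<integral>\<^sup>+\<omega>. (\<Prod>r<m. F r (fst \<omega> r) (fst (snd \<omega>) r) (snd (snd \<omega>) r)) \<partial>init_measure m d)"
    by (rule nn_integral_cmult) (unfold F_def inner_d_def, measurable)
  also have "\<dots> = ennreal (exp (- t)) * (\<Prod>r<m. \<integral>\<^sup>+w. \<integral>\<^sup>+\<beta>. (F r (real m powr (-1/3)) w \<beta> + F r (- (real m powr (-1/3))) w \<beta>)/2 \<partial>gauss_m m \<partial>Wd m d)"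
    by (subst init_prod[OF m Fm]) (rule refl)
  also have "\<dots> \<le> ennreal (exp (- t)) * (\<Prod>r<m. ennreal (exp (2 * \<delta> * sqrt m)))"
  proof (intro mult_left_mono prod_mono_ennreal)
    fix r assume "r \<in> {..<m}"
    have "(\<integral>\<^sup>+w. \<integral>\<^sup>+\<beta>. (F r (real m powr (-1/3)) w \<beta> + F r (- (real m powr (-1/3))) w \<beta>)/2 \<partial>gauss_m m \<partial>Wd m d)
       = (\<integral>\<^sup>+w. \<integral>\<^sup>+\<beta>. ennreal (exp (if \<bar>inner_d d w y + \<beta>\<bar> \<le> \<delta> then 1 else 0)) \<partial>gauss_m m \<partial>Wd m d)"
      unfolding F_def by simp
    also have "\<dots> \<le> (\<integral>\<^sup>+w. ennreal (exp (2 * \<delta> * sqrt m)) \<partial>Wd m d)"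
      by (intro nn_integral_mono N_beta[OF m \<delta>])
    also have "\<dots> = ennreal (exp (2 * \<delta> * sqrt m))"
      using Wp.emeasure_space_1 by simp
    finally show "(\<integral>\<^sup>+w. \<integral>\<^sup>+\<beta>. (F r (real m powr (-1/3)) w \<beta> + F r (- (real m powr (-1/3))) w \<beta>)/2 \<partial>gauss_m m \<partial>Wd m d) \<le> ennreal (exp (2 * \<delta> * sqrt m))" .
  qed simp
  also have "\<dots> = ennreal (exp (- t + 2 * \<delta> * real m * sqrt m))"
  proof -
    have "(\<Prod>r<m. ennreal (exp (2 * \<delta> * sqrt m))) = ennreal ((exp (2 * \<delta> * sqrt m)) ^ m)"
      by (simp add: ennreal_power)
    also have "(exp (2 * \<delta> * sqrt m)) ^ m = exp (real m * (2 * \<delta> * sqrt m))"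
      by (rule exp_of_nat_mult[symmetric])
    finally have "(\<Prod>r<m. ennreal (exp (2 * \<delta> * sqrt m))) = ennreal (exp (real m * (2 * \<delta> * sqrt m)))" .
    then show ?thesis by (simp add: ennreal_mult[symmetric] exp_add[symmetric] algebra_simps)
  qed
  finally show ?thesis .
qed

lemma cs_inner: "\<bar>inner_d d u v\<bar> \<le> norm_d d u * norm_d d v"
proof -
  have "\<bar>inner_d d u v\<bar> \<le> (\<Sum>i<d. \<bar>u i\<bar> * \<bar>v i\<bar>)"
    unfolding inner_d_def by (rule order_trans[OF sum_abs]) (simp add: abs_mult)
  also have "\<dots> \<le> L2_set u {..<d} * L2_set v {..<d}" by (rule L2_set_mult_ineq)
  finally show ?thesis by (simp add: norm_d_def L2_set_def)
qed

lemma relu_lip: "\<bar>relu a - relu b\<bar> \<le> \<bar>a - b\<bar>"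
  unfolding relu_def by (auto simp: max_def)

lemma psi_bound: "\<bar>relu (u + \<delta>) - relu u - \<delta> * (if u \<ge> 0 then 1 else 0)\<bar> \<le> (if \<bar>u\<bar> \<le> \<bar>\<delta>\<bar> then \<bar>\<delta>\<bar> else 0)"
  unfolding relu_def by (auto simp: max_def abs_if split: if_splits)

lemma inner_diff: "inner_d d (\<lambda>i. W i - W0 i) x = inner_d d W x - inner_d d W0 x"
  by (simp add: inner_d_def sum_subtractf left_diff_distrib)

lemma Xset_facts:
  assumes "x \<in> Xset d"
  shows "(\<Sum>i<d. (x i)\<^sup>2) = 1" "\<And>i. i < d \<Longrightarrow> \<bar>x i\<bar> \<le> 1" "1 \<le> d" "norm_d d x = 1"
proof -
  show n: "norm_d d x = 1" using assms by (simp add: Xset_def)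
  have "0 \<le> (\<Sum>i<d. (x i)\<^sup>2)" by (simp add: sum_nonneg)
  then show s: "(\<Sum>i<d. (x i)\<^sup>2) = 1" using n unfolding norm_d_def by simp
  show "1 \<le> d" using s by (cases d) auto
  fix i assume "i < d"
  then have "(x i)\<^sup>2 \<le> (\<Sum>i<d. (x i)\<^sup>2)" by (intro member_le_sum) auto
  then have "(x i)\<^sup>2 \<le> 1" using s by simp
  then show "\<bar>x i\<bar> \<le> 1" by (simp add: abs_square_le_1)
qed

definition gridpt :: "nat \<Rightarrow> nat \<Rightarrow> (nat \<Rightarrow> int) \<Rightarrow> (nat \<Rightarrow> real)" where
  "gridpt d m j = (\<lambda>i. if i < d then of_int (j i) / real (d*m) else 0)"

definition Grid :: "nat \<Rightarrow> nat \<Rightarrow> (nat \<Rightarrow> real) set" where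
  "Grid d m = {y \<in> gridpt d m ` (PiE {..<d} (\<lambda>_. {- int (d*m)..int (d*m)})). (\<Sum>i<d. (y i)\<^sup>2) \<le> 4}"

lemma Grid_finite: "finite (Grid d m)"
  unfolding Grid_def by (rule finite_subset[of _ "gridpt d m ` (PiE {..<d} (\<lambda>_. {- int (d*m)..int (d*m)}))"]) (auto intro: finite_PiE)

lemma Grid_card: "card (Grid d m) \<le> (2*d*m+1)^d"
proof -
  have "card (Grid d m) \<le> card (gridpt d m ` (PiE {..<d} (\<lambda>_. {- int (d*m)..int (d*m)})))"
    unfolding Grid_def by (intro card_mono) (auto intro: finite_PiE)
  also have "\<dots> \<le> card (PiE {..<d} (\<lambda>_. {- int (d*m)..int (d*m)}))"
    by (rule card_image_le) (auto intro: finite_PiE)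
  also have "\<dots> = (2*d*m+1)^d"
    by (simp add: card_PiE nat_add_distrib nat_mult_distrib mult.assoc)
  finally show ?thesis .
qed

lemma grid_approx:
  assumes x: "x \<in> Xset d" and m: "1 \<le> m"
  shows "\<exists>y \<in> Grid d m. \<forall>i<d. \<bar>x i - y i\<bar> \<le> 1 / real (d*m)"
proof -
  have d: "1 \<le> d" by (rule Xset_facts(3)[OF x])
  define K where "K = real (d*m)"
  have "1 \<le> d * m" using d m by (simp add: one_le_mult_iff)
  then have K1: "1 \<le> K" unfolding K_def by (metis of_nat_1 of_nat_le_iff)
  define j where "j = restrict (\<lambda>i. \<lfloor>x i * K\<rfloor>) {..<d}"
  define y where "y = gridpt d m j"
  have xb: "\<bar>x i\<bar> \<le> 1" if "i < d" for i using Xset_facts(2)[OF x that] .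
  have jr: "- int (d*m) \<le> \<lfloor>x i * K\<rfloor> \<and> \<lfloor>x i * K\<rfloor> \<le> int (d*m)" if i: "i < d" for i
  proof -
    have "\<bar>x i * K\<bar> \<le> K" using xb[OF i] K1 by (simp add: abs_mult mult_left_le_one_le)
    then have a: "- K \<le> x i * K" "x i * K \<le> K" by auto
    have "- int (d*m) \<le> \<lfloor>x i * K\<rfloor>" using a(1) unfolding K_def by (simp add: le_floor_iff)
    moreover have "\<lfloor>x i * K\<rfloor> \<le> int (d*m)" using a(2) unfolding K_def by (simp add: floor_le_iff)
    ultimately show ?thesis by simp
  qed
  have jP: "j \<in> PiE {..<d} (\<lambda>_. {- int (d*m)..int (d*m)})"
    unfolding j_def using jr by auto
  have close: "\<bar>x i - y i\<bar> \<le> 1 / K" if i: "i < d" for i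
  proof -
    have yi: "y i = of_int \<lfloor>x i * K\<rfloor> / K" using i by (simp add: y_def gridpt_def j_def K_def)
    have "of_int \<lfloor>x i * K\<rfloor> \<le> x i * K" "x i * K < of_int \<lfloor>x i * K\<rfloor> + 1" by linarith+
    then have "0 \<le> x i * K - of_int \<lfloor>x i * K\<rfloor>" "x i * K - of_int \<lfloor>x i * K\<rfloor> \<le> 1" by linarith+
    moreover have "x i - y i = (x i * K - of_int \<lfloor>x i * K\<rfloor>) / K" using K1 by (simp add: yi field_simps)
    ultimately show ?thesis using K1 by (simp add: divide_right_mono)
  qed
  have ysq: "(y i)\<^sup>2 \<le> 2 * (x i)\<^sup>2 + 2 / K\<^sup>2" if i: "i < d" for i
  proof -
    have "\<bar>y i\<bar> \<le> \<bar>x i\<bar> + 1/K" using close[OF i] by linarith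
    then have "(y i)\<^sup>2 \<le> (\<bar>x i\<bar> + 1/K)\<^sup>2" by (metis abs_ge_zero abs_power2 power2_abs power_mono)
    also have "\<dots> \<le> 2 * (x i)\<^sup>2 + 2 / K\<^sup>2"
    proof -
      have sq: "(a+b)\<^sup>2 \<le> 2*a\<^sup>2 + 2*b\<^sup>2" for a b :: real
      proof -
        have "(a+b)\<^sup>2 + (a-b)\<^sup>2 = 2*a\<^sup>2 + 2*b\<^sup>2" by (simp add: power2_eq_square algebra_simps)
        moreover have "0 \<le> (a-b)\<^sup>2" by simp
        ultimately show ?thesis by linarith
      qed
      have "(1/K)\<^sup>2 = 1/K\<^sup>2" by (simp add: power_divide)
      then show ?thesis using sq[of "\<bar>x i\<bar>" "1/K"] by simp
    qed
    finally show ?thesis .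
  qed
  have "(\<Sum>i<d. (y i)\<^sup>2) \<le> (\<Sum>i<d. 2 * (x i)\<^sup>2 + 2 / K\<^sup>2)" by (intro sum_mono ysq) auto
  also have "\<dots> = 2 * (\<Sum>i<d. (x i)\<^sup>2) + real d * (2 / K\<^sup>2)" by (simp add: sum.distrib sum_distrib_left)
  also have "\<dots> = 2 + real d * (2 / K\<^sup>2)" using Xset_facts(1)[OF x] by simp
  also have "\<dots> \<le> 4"
  proof -
    have "d * 1 \<le> d * m" using m by (intro mult_left_mono) auto
    then have "real d \<le> K" unfolding K_def by (metis mult.right_neutral of_nat_le_iff)
    also have "K \<le> K\<^sup>2" using K1 by (simp add: power2_eq_square)
    finally have "real d / K\<^sup>2 \<le> 1" using K1 by simp
    moreover have "real d * (2 / K\<^sup>2) = 2 * (real d / K\<^sup>2)" by simp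
    ultimately show ?thesis by linarith
  qed
  finally have "(\<Sum>i<d. (y i)\<^sup>2) \<le> 4" .
  then have "y \<in> Grid d m" using jP unfolding Grid_def y_def by auto
  then show ?thesis using close unfolding K_def by auto
qed

lemma det_bound:
  assumes m: "1 \<le> m" and R: "1 \<le> R" and x: "x \<in> Xset d"
  and Ha: "\<forall>r<m. \<bar>a r\<bar> = real m powr (-1/3)"
  and HW: "\<forall>r<m. \<forall>i<d. \<bar>W0 r i\<bar> < 1"
  and HT: "\<forall>y\<in>Grid d m. \<bar>Tf m d y (a, W0, b)\<bar> < t1"
  and HN: "\<forall>y\<in>Grid d m. Nf m d y (2 * (R / real m powr (2/3))) (a, W0, b) < t2"
  and HWn: "norm_2inf m d (\<lambda>r i. W r i - W0 r i) \<le> R / real m powr (2/3)"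
  shows "\<bar>fnet m d a b W x - gnet m d a b W0 W x\<bar>
     \<le> t1 + real m powr (-1/3) + real m powr (-1/3) * (R / real m powr (2/3)) * t2"
proof -
  define s where "s = real m powr (-1/3)"
  define \<rho> where "\<rho> = R / real m powr (2/3)"
  have s0: "0 \<le> s" by (simp add: s_def)
  have m0: "0 < real m" using m by simp
  obtain y where y: "y \<in> Grid d m" and yc: "\<forall>i<d. \<bar>x i - y i\<bar> \<le> 1 / real (d*m)"
    using grid_approx[OF x m] by blast
  have d1: "1 \<le> d" by (rule Xset_facts(3)[OF x])
  have nx: "norm_d d x = 1" by (rule Xset_facts(4)[OF x])
  define U where "U r = inner_d d (W0 r) x + b r" for r
  define V where "V r = inner_d d (W0 r) y + b r" for r
  define D where "D r = inner_d d (\<lambda>i. W r i - W0 r i) x" for r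
  have UV: "\<bar>U r - V r\<bar> \<le> 1 / real m" if r: "r < m" for r
  proof -
    have "U r - V r = (\<Sum>i<d. W0 r i * (x i - y i))"
      by (simp add: U_def V_def inner_d_def sum_subtractf right_diff_distrib)
    also have "\<bar>\<dots>\<bar> \<le> (\<Sum>i<d. \<bar>W0 r i\<bar> * \<bar>x i - y i\<bar>)"
      by (rule order_trans[OF sum_abs]) (simp add: abs_mult)
    also have "\<dots> \<le> (\<Sum>i<d. 1 * (1 / real (d*m)))"
      using HW r yc by (intro sum_mono mult_mono) (auto simp: less_imp_le)
    also have "\<dots> = 1 / real m" using d1 by simp
    finally show ?thesis .
  qed
  have Dr: "\<bar>D r\<bar> \<le> \<rho>" if r: "r < m" for r
  proof -
    have "\<bar>D r\<bar> \<le> norm_d d (\<lambda>i. W r i - W0 r i) * norm_d d x" unfolding D_def by (rule cs_inner)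
    also have "\<dots> = norm_d d (\<lambda>i. W r i - W0 r i)" using nx by simp
    also have "\<dots> \<le> norm_2inf m d (\<lambda>r i. W r i - W0 r i)"
      unfolding norm_2inf_def using r by (intro Max_ge) auto
    also have "\<dots> \<le> \<rho>" using HWn by (simp add: \<rho>_def)
    finally show ?thesis .
  qed
  have inv_m: "1 / real m \<le> \<rho>"
  proof -
    have "real m powr (2/3) \<le> real m powr 1" using m by (intro powr_mono) auto
    then have "real m powr (2/3) \<le> real m" using m0 by simp
    then have "1 / real m \<le> 1 / real m powr (2/3)" using m0 by (intro divide_left_mono) auto
    also have "\<dots> \<le> \<rho>" unfolding \<rho>_def using R by (intro divide_right_mono) auto
    finally show ?thesis .
  qed
  have fg: "fnet m d a b W x - gnet m d a b W0 W x
      = (\<Sum>r<m. a r * relu (V r)) + (\<Sum>r<m. a r * (relu (U r) - relu (V r)))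
        + (\<Sum>r<m. a r * (relu (U r + D r) - relu (U r) - D r * (if U r \<ge> 0 then 1 else 0)))"
  proof -
    have e1: "inner_d d (W r) x + b r = U r + D r" for r
      by (simp add: U_def D_def inner_diff)
    have "fnet m d a b W x - gnet m d a b W0 W x = (\<Sum>r<m. a r * relu (U r + D r) - a r * D r * (if U r \<ge> 0 then 1 else 0))"
      unfolding fnet_def gnet_def sum_subtractf[symmetric]
      by (intro sum.cong) (auto simp: e1 U_def[symmetric] D_def[symmetric])
    also have "\<dots> = (\<Sum>r<m. a r * relu (V r) + a r * (relu (U r) - relu (V r))
        + a r * (relu (U r + D r) - relu (U r) - D r * (if U r \<ge> 0 then 1 else 0)))"
      by (intro sum.cong) (auto simp: algebra_simps)
    finally show ?thesis by (simp only: sum.distrib)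
  qed
  have T1: "\<bar>\<Sum>r<m. a r * relu (V r)\<bar> < t1"
    using HT y by (simp add: Tf_def V_def)
  have T2: "\<bar>\<Sum>r<m. a r * (relu (U r) - relu (V r))\<bar> \<le> s"
  proof -
    have "\<bar>\<Sum>r<m. a r * (relu (U r) - relu (V r))\<bar> \<le> (\<Sum>r<m. \<bar>a r\<bar> * \<bar>relu (U r) - relu (V r)\<bar>)"
      by (rule order_trans[OF sum_abs]) (simp add: abs_mult)
    also have "\<dots> \<le> (\<Sum>r<m. s * (1 / real m))"
    proof (intro sum_mono)
      fix r assume "r \<in> {..<m}"
      then have r: "r < m" by simp
      show "\<bar>a r\<bar> * \<bar>relu (U r) - relu (V r)\<bar> \<le> s * (1 / real m)"
      proof -
        have ar: "\<bar>a r\<bar> = s" using Ha r by (simp add: s_def)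
        have "\<bar>relu (U r) - relu (V r)\<bar> \<le> 1 / real m" using relu_lip[of "U r" "V r"] UV[OF r] by linarith
        then show ?thesis unfolding ar using s0 by (rule mult_left_mono)
      qed
    qed
    also have "\<dots> = s" using m0 by simp
    finally show ?thesis .
  qed
  have T3: "\<bar>\<Sum>r<m. a r * (relu (U r + D r) - relu (U r) - D r * (if U r \<ge> 0 then 1 else 0))\<bar>
      \<le> s * \<rho> * Nf m d y (2 * \<rho>) (a, W0, b)"
  proof -
    have "\<bar>\<Sum>r<m. a r * (relu (U r + D r) - relu (U r) - D r * (if U r \<ge> 0 then 1 else 0))\<bar>
       \<le> (\<Sum>r<m. \<bar>a r\<bar> * \<bar>relu (U r + D r) - relu (U r) - D r * (if U r \<ge> 0 then 1 else 0)\<bar>)"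
      by (rule order_trans[OF sum_abs]) (simp add: abs_mult)
    also have "\<dots> \<le> (\<Sum>r<m. s * \<rho> * (if \<bar>V r\<bar> \<le> 2 * \<rho> then 1 else 0))"
    proof (intro sum_mono)
      fix r assume "r \<in> {..<m}"
      then have r: "r < m" by simp
      have ar: "\<bar>a r\<bar> = s" using Ha r by (simp add: s_def)
      have pb: "\<bar>relu (U r + D r) - relu (U r) - D r * (if U r \<ge> 0 then 1 else 0)\<bar> \<le> (if \<bar>U r\<bar> \<le> \<bar>D r\<bar> then \<bar>D r\<bar> else 0)"
        by (rule psi_bound)
      have "(if \<bar>U r\<bar> \<le> \<bar>D r\<bar> then \<bar>D r\<bar> else 0) \<le> \<rho> * (if \<bar>V r\<bar> \<le> 2 * \<rho> then 1 else 0)"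
      proof (cases "\<bar>U r\<bar> \<le> \<bar>D r\<bar>")
        case True
        then have "\<bar>V r\<bar> \<le> 2 * \<rho>" using UV[OF r] Dr[OF r] inv_m by linarith
        then show ?thesis using True Dr[OF r] by simp
      next
        case False
        have "0 \<le> \<rho>" using Dr[OF r] by linarith
        then show ?thesis using False by simp
      qed
      then have "\<bar>relu (U r + D r) - relu (U r) - D r * (if U r \<ge> 0 then 1 else 0)\<bar> \<le> \<rho> * (if \<bar>V r\<bar> \<le> 2 * \<rho> then 1 else 0)"
        using pb by linarith
      then show "\<bar>a r\<bar> * \<bar>relu (U r + D r) - relu (U r) - D r * (if U r \<ge> 0 then 1 else 0)\<bar> \<le> s * \<rho> * (if \<bar>V r\<bar> \<le> 2 * \<rho> then 1 else 0)"
        unfolding ar using s0 by (simp add: mult.assoc mult_left_mono)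
    qed
    also have "\<dots> = s * \<rho> * Nf m d y (2 * \<rho>) (a, W0, b)"
      by (simp add: Nf_def V_def sum_distrib_left)
    finally show ?thesis .
  qed
  have N: "Nf m d y (2 * \<rho>) (a, W0, b) < t2" using HN y by (simp add: \<rho>_def)
  have "0 \<le> 1 / real m" by simp
  then have "0 \<le> \<rho>" using inv_m by linarith
  then have sr0: "0 \<le> s * \<rho>" using s0 by simp
  have "\<bar>fnet m d a b W x - gnet m d a b W0 W x\<bar> \<le> t1 + s + s * \<rho> * t2"
  proof -
    have "s * \<rho> * Nf m d y (2 * \<rho>) (a, W0, b) \<le> s * \<rho> * t2" using N sr0 by (intro mult_left_mono) auto
    then show ?thesis unfolding fg using T1 T2 T3 by linarith
  qed
  then show ?thesis unfolding s_def \<rho>_def .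
qed

lemma exp_ge_self: "(x::real) \<le> exp x"
  using exp_ge_add_one_self[of x] by linarith

lemma ln_bound_exp: "0 < (a::real) \<Longrightarrow> a \<le> exp (a - 1)"
proof -
  assume a: "0 < a"
  have "ln a \<le> a - 1" using ln_le_minus_one[OF a] .
  then show ?thesis using a by (metis exp_le_cancel_iff exp_ln)
qed

lemma NUM:
  fixes z D :: real and d :: nat
  assumes z: "2 \<le> z" and D: "D = real d" "D \<le> z"
  shows "2 * z^12 * D * exp (-(z^12)/2) + (2*D*z^12+1)^d * (2*exp (-10*z^4) + exp (-(z^10))) \<le> exp (-(z^4))"
proof -
  have z0: "0 < z" using z by simp
  have D0: "0 \<le> D" using D by simp
  have z4: "16 \<le> z^4"
  proof -
    have "2^4 \<le> z^4" using z by (intro power_mono) auto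
    then show ?thesis by simp
  qed
  have z8: "256 \<le> z^8"
  proof -
    have "2^8 \<le> z^8" using z by (intro power_mono) auto
    then show ?thesis by simp
  qed
  have z6: "64 \<le> z^6"
  proof -
    have "2^6 \<le> z^6" using z by (intro power_mono) auto
    then show ?thesis by simp
  qed
  have z2: "4 \<le> z^2"
  proof -
    have "2^2 \<le> z^2" using z by (intro power_mono) auto
    then show ?thesis by simp
  qed
  have zn: "z^n \<le> exp (real n * z)" for n
  proof -
    have "z^n \<le> (exp z)^n" using z0 by (intro power_mono exp_ge_self) auto
    then show ?thesis by (simp add: exp_of_nat_mult)
  qed
  have zD: "z^12 * D \<le> z^13"
  proof -
    have "z^12 * D \<le> z^12 * z" using D D0 by (intro mult_left_mono) auto
    moreover have "z^13 = z^12 * z^1" by (subst power_add[symmetric]) simp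
    ultimately show ?thesis by simp
  qed
  have P1: "2 * z^12 * D * exp (-(z^12)/2) \<le> exp (-(z^4)) / 2"
  proof -
    have "2 * z^12 * D \<le> 2 * z^13"
    proof -
      have "z^12 * D \<le> z^12 * z" using D D0 by (intro mult_left_mono) auto
      moreover have "z^13 = z^12 * z^1" by (subst power_add[symmetric]) simp
      ultimately show ?thesis by simp
    qed
    also have "\<dots> \<le> 2 * exp (13 * z)" using zn[of 13] by simp
    finally have a: "2 * z^12 * D \<le> 2 * exp (13 * z)" .
    have poly: "3 + 13 * z + z^4 \<le> z^12 / 2"
    proof -
      have e: "z^8 * z^4 = z^12" by (subst power_add[symmetric]) simp
      have "256 * z^4 \<le> z^8 * z^4" by (rule mult_right_mono[OF z8]) simp
      then have "256 * z^4 \<le> z^12" unfolding e .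
      moreover have "z \<le> z^4"
      proof -
        have "z^1 \<le> z^4" using z by (intro power_increasing) auto
        then show ?thesis by simp
      qed
      ultimately show ?thesis using z4 by linarith
    qed
    have "4 * exp (13 * z) * exp (-(z^12)/2) \<le> exp 3 * exp (13 * z) * exp (-(z^12)/2)"
      using ln_bound_exp[of 4] by (intro mult_right_mono) auto
    also have "\<dots> = exp (3 + 13 * z - z^12/2)" by (simp add: exp_add[symmetric] exp_diff)
    also have "\<dots> \<le> exp (-(z^4))" using poly by simp
    finally have b: "4 * exp (13 * z) * exp (-(z^12)/2) \<le> exp (-(z^4))" .
    have "2 * z^12 * D * exp (-(z^12)/2) \<le> 2 * exp (13 * z) * exp (-(z^12)/2)"
      using a by (intro mult_right_mono) auto
    then show ?thesis using b by linarith
  qed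
  have base: "2*D*z^12+1 \<le> exp (15 * z)"
  proof -
    have "2*D*z^12 \<le> 2*z^13" using zD by (simp add: mult.commute mult.left_commute)
    moreover have "1 \<le> z^13" using z by (intro one_le_power) auto
    ultimately have "2*D*z^12+1 \<le> 3*z^13" by linarith
    also have "\<dots> \<le> z^2 * z^13" using z2 z0 by (intro mult_right_mono) auto
    also have "\<dots> = z^15" by (subst power_add[symmetric]) simp
    also have "\<dots> \<le> exp (15 * z)" using zn[of 15] by simp
    finally show ?thesis .
  qed
  have pw: "(2*D*z^12+1)^d \<le> exp (15 * z^2)"
  proof -
    have "(2*D*z^12+1)^d \<le> (exp (15 * z))^d" using base D0 z0 by (intro power_mono) auto
    also have "\<dots> = exp (D * (15 * z))" using D by (simp add: exp_of_nat_mult)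
    also have "\<dots> \<le> exp (15 * z^2)" using D D0 z0 by (simp add: power2_eq_square mult_right_mono)
    finally show ?thesis .
  qed
  have ex: "2*exp (-10*z^4) + exp (-(z^10)) \<le> 3 * exp (-10*z^4)"
  proof -
    have e: "z^6 * z^4 = z^10" by (subst power_add[symmetric]) simp
    have "64 * z^4 \<le> z^6 * z^4" by (rule mult_right_mono[OF z6]) simp
    then have "10 * z^4 \<le> z^10" unfolding e using z4 by linarith
    then show ?thesis by simp
  qed
  have P2: "(2*D*z^12+1)^d * (2*exp (-10*z^4) + exp (-(z^10))) \<le> exp (-(z^4)) / 2"
  proof -
    have "(2*D*z^12+1)^d * (2*exp (-10*z^4) + exp (-(z^10))) \<le> exp (15 * z^2) * (3 * exp (-10*z^4))"
      using pw ex by (intro mult_mono) auto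
    also have "\<dots> \<le> exp (15 * z^2) * (exp 2 * exp (-10*z^4))"
      using ln_bound_exp[of 3] by (intro mult_left_mono mult_right_mono) auto
    also have "\<dots> = exp (2 + 15 * z^2 - 10*z^4)" by (simp add: exp_add[symmetric] exp_diff algebra_simps)
    also have "\<dots> \<le> exp (-(z^4)) / 2"
    proof -
      have e: "z^2 * z^2 = z^4" by (subst power_add[symmetric]) simp
      have "4 * z^2 \<le> z^2 * z^2" by (rule mult_right_mono[OF z2]) simp
      then have "4 * z^2 \<le> z^4" unfolding e .
      then have "2 + 15 * z^2 - 10*z^4 \<le> -(z^4) - 2" using z2 by linarith
      then have "exp (2 + 15 * z^2 - 10*z^4) \<le> exp (-(z^4) - 2)" by simp
      also have "\<dots> = exp (-(z^4)) / exp 2" by (simp add: exp_diff)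
      also have "\<dots> \<le> exp (-(z^4)) / 2"
        using exp_ge_add_one_self[of 2] by (intro divide_left_mono) auto
      finally show ?thesis .
    qed
    finally show ?thesis .
  qed
  show ?thesis using P1 P2 by linarith
qed

lemma zpow: "0 < x \<Longrightarrow> (x powr (1/12)) ^ n = x powr (real n / 12)"
  by (simp add: powr_realpow[symmetric] powr_powr)

lemma pw1: "1 \<le> m \<Longrightarrow> real m powr (-1/3) * (R / real m powr (2/3)) * (5*R*real m powr (5/6)) = 5 * R\<^sup>2 / real m powr (1/6)"
proof -
  assume m: "1 \<le> m"
  then have m0: "0 < real m" by simp
  have "real m powr (-1/3) * (R / real m powr (2/3)) * (5*R*real m powr (5/6))
       = 5 * R\<^sup>2 * (real m powr (-1/3) * real m powr (5/6) / real m powr (2/3))"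
    by (simp add: power2_eq_square field_simps)
  also have "real m powr (-1/3) * real m powr (5/6) / real m powr (2/3) = real m powr (-1/6)"
    using m0 by (simp add: powr_add[symmetric] powr_diff[symmetric])
  also have "real m powr (-1/6) = 1 / real m powr (1/6)"
    using m0 by (simp add: powr_minus_divide)
  finally show ?thesis by simp
qed

lemma pw2: "1 \<le> m \<Longrightarrow> real m powr (-1/3) \<le> 1 / real m powr (1/6)"
proof -
  assume m: "1 \<le> m"
  have "real m powr (-1/3) \<le> real m powr (-1/6)" using m by (intro powr_mono) auto
  also have "real m powr (-1/6) = 1 / real m powr (1/6)" using m by (simp add: powr_minus_divide)
  finally show ?thesis .
qed

lemma pw3: "1 \<le> m \<Longrightarrow> (10 / real m powr (1/6))\<^sup>2 * real m powr (2/3) / 10 = 10 * real m powr (1/3)"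
proof -
  assume m: "1 \<le> m"
  then have m0: "0 < real m" by simp
  have "(real m powr (1/6))\<^sup>2 = real m powr (1/3)"
    using m0 by (simp add: power2_eq_square powr_add[symmetric])
  moreover have "real m powr (2/3) / real m powr (1/3) = real m powr (1/3)"
    using m0 by (simp add: powr_diff[symmetric])
  ultimately show ?thesis using m0 by (simp add: power_divide field_simps)
qed

lemma pw4: "1 \<le> m \<Longrightarrow> 2 * (2 * (R / real m powr (2/3))) * real m * sqrt (real m) = 4 * R * real m powr (5/6)"
proof -
  assume m: "1 \<le> m"
  then have m0: "0 < real m" by simp
  have "real m * sqrt (real m) / real m powr (2/3) = real m powr (5/6)"
  proof -
    have "real m * sqrt (real m) = real m powr (3/2)"
    proof -
      have "real m powr (3/2) = real m powr (1 + 1/2)" by simp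
      also have "\<dots> = real m powr 1 * real m powr (1/2)" by (rule powr_add)
      finally have "real m powr (3/2) = real m powr 1 * real m powr (1/2)" .
      then show ?thesis using m0 by (simp add: powr_half_sqrt)
    qed
    then show ?thesis using m0 by (simp add: powr_diff[symmetric])
  qed
  moreover have "2 * (2 * (R / real m powr (2/3))) * real m * sqrt (real m) = 4 * R * (real m * sqrt (real m) / real m powr (2/3))"
    by simp
  ultimately show ?thesis by simp
qed

lemma meas_from_emeas:
  assumes "prob_space M" "emeasure M A \<le> ennreal x" "0 \<le> x"
  shows "measure M A \<le> x"
proof -
  interpret prob_space M by (rule assms(1))
  have "emeasure M A = ennreal (measure M A)" by (rule emeasure_eq_measure)
  then show ?thesis using assms(2,3) by simp
qed

lemma not_abs_less: "\<not> \<bar>v\<bar> < (c::real) \<Longrightarrow> c \<le> 1 * v \<or> c \<le> -1 * v"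
  by linarith

lemma main_case:
  assumes d: "2 \<le> d" and R: "1 \<le> R" and m: "1 \<le> m" and mC: "16 * real d ^ 12 \<le> real m"
  shows "\<exists>E \<in> sets (init_measure m d).
        measure (init_measure m d) E \<ge> 1 - exp (- 1 * real m powr (1/3)) \<and>
        (\<forall>(a0, W0, b0) \<in> E. \<forall>W :: nat \<Rightarrow> nat \<Rightarrow> real.
           norm_2inf m d (\<lambda>r i. W r i - W0 r i) \<le> R / real m powr (2/3) \<longrightarrow>
           (\<forall>x \<in> Xset d.
              \<bar>fnet m d a0 b0 W x - gnet m d a0 b0 W0 W x\<bar>
                \<le> 16 * R\<^sup>2 / real m powr (1/6)))"
proof -
  define M where "M = init_measure m d"
  have m0: "0 < m" using m by simp
  interpret P: prob_space M unfolding M_def by (rule prob_init[OF m0])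
  define s where "s = real m powr (-1/3)"
  define \<rho> where "\<rho> = R / real m powr (2/3)"
  define t1 where "t1 = 10 / real m powr (1/6)"
  define t2 where "t2 = 5 * R * real m powr (5/6)"
  define G where "G = Grid d m"
  have Gfin: "finite G" unfolding G_def by (rule Grid_finite)
  define E where "E = {\<omega> \<in> space M. (\<forall>r\<in>{..<m}. \<bar>fst \<omega> r\<bar> = s) \<and> (\<forall>r\<in>{..<m}. \<forall>i\<in>{..<d}. \<bar>fst (snd \<omega>) r i\<bar> < 1)
      \<and> (\<forall>y\<in>G. \<bar>Tf m d y \<omega>\<bar> < t1) \<and> (\<forall>y\<in>G. Nf m d y (2*\<rho>) \<omega> < t2)}"
  have Esets: "E \<in> sets M"
    unfolding E_def M_def using Gfin by measurable
  have s0: "0 < s" using m0 by (simp add: s_def)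
  define BA where "BA = (\<Union>r\<in>{..<m}. {\<omega> \<in> space M. \<bar>fst \<omega> r\<bar> \<noteq> s})"
  define BW1 where "BW1 r i \<sigma> = {\<omega> \<in> space M. 1 \<le> \<sigma> * fst (snd \<omega>) r i}" for r i and \<sigma> :: real
  define BW where "BW = (\<Union>r\<in>{..<m}. \<Union>i\<in>{..<d}. BW1 r i 1 \<union> BW1 r i (-1))"
  define BT1 where "BT1 y \<sigma> = {\<omega> \<in> space M. t1 \<le> \<sigma> * Tf m d y \<omega>}" for y and \<sigma> :: real
  define BT where "BT = (\<Union>y\<in>G. BT1 y 1 \<union> BT1 y (-1))"
  define BN1 where "BN1 y = {\<omega> \<in> space M. t2 \<le> Nf m d y (2*\<rho>) \<omega>}" for y
  define BN where "BN = (\<Union>y\<in>G. BN1 y)"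
  have BN1s: "BN1 y \<in> sets M" for y unfolding BN1_def M_def by measurable
  have BW1s: "BW1 r i \<sigma> \<in> sets M" for r i \<sigma> unfolding BW1_def M_def by measurable
  have BT1s: "BT1 y \<sigma> \<in> sets M" for y \<sigma> unfolding BT1_def M_def by measurable
  have BAs: "BA \<in> sets M" unfolding BA_def M_def by measurable
  have BWs: "BW \<in> sets M" unfolding BW_def using BW1s by auto
  have BTs: "BT \<in> sets M" unfolding BT_def using BT1s Gfin by auto
  have BNs: "BN \<in> sets M" unfolding BN_def using BN1s Gfin by auto
  have sub: "space M - E \<subseteq> BA \<union> BW \<union> BT \<union> BN"
  proof
    fix \<omega> assume w: "\<omega> \<in> space M - E"
    show "\<omega> \<in> BA \<union> BW \<union> BT \<union> BN"
    proof (cases "\<forall>r\<in>{..<m}. \<bar>fst \<omega> r\<bar> = s")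
      case False
      then show ?thesis using w unfolding BA_def by auto
    next
      case a: True
      show ?thesis
      proof (cases "\<forall>r\<in>{..<m}. \<forall>i\<in>{..<d}. \<bar>fst (snd \<omega>) r i\<bar> < 1")
        case False
        then obtain r i where "r < m" "i < d" "\<not> \<bar>fst (snd \<omega>) r i\<bar> < 1" by auto
        then show ?thesis using w not_abs_less[of "fst (snd \<omega>) r i" 1] unfolding BW_def BW1_def by auto
      next
        case W: True
        show ?thesis
        proof (cases "\<forall>y\<in>G. \<bar>Tf m d y \<omega>\<bar> < t1")
          case False
          then obtain y where "y \<in> G" "\<not> \<bar>Tf m d y \<omega>\<bar> < t1" by auto
          then show ?thesis using w not_abs_less[of "Tf m d y \<omega>" t1] unfolding BT_def BT1_def by auto
        next
          case T: True
          then have "\<not> (\<forall>y\<in>G. Nf m d y (2*\<rho>) \<omega> < t2)" using w a W unfolding E_def by auto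
          then show ?thesis using w unfolding BN_def BN1_def by (auto simp: not_less)
        qed
      qed
    qed
  qed
  have mBA: "measure M BA \<le> 0"
  proof -
    have "measure M BA \<le> (\<Sum>r\<in>{..<m}. measure M {\<omega> \<in> space M. \<bar>fst \<omega> r\<bar> \<noteq> s})"
      unfolding BA_def by (rule measure_UNION_le) (auto simp: M_def)
    also have "\<dots> = 0"
    proof (intro sum.neutral ballI)
      fix r assume "r \<in> {..<m}"
      then have "emeasure M {\<omega> \<in> space M. \<bar>fst \<omega> r\<bar> \<noteq> s} = 0"
        unfolding M_def s_def using bad_a[OF m0] by simp
      then show "measure M {\<omega> \<in> space M. \<bar>fst \<omega> r\<bar> \<noteq> s} = 0" by (simp add: measure_def)
    qed
    finally show ?thesis .
  qed
  have mBW1: "measure M (BW1 r i \<sigma>) \<le> exp (- real m / 2)" if "r < m" "i < d" "\<sigma> = 1 \<or> \<sigma> = -1" for r i \<sigma>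
    using bad_W[OF m0 that] unfolding BW1_def M_def
    by (intro meas_from_emeas[OF prob_init[OF m0]]) auto
  have mBW: "measure M BW \<le> real m * (real d * (2 * exp (- real m / 2)))"
  proof -
    have "measure M BW \<le> (\<Sum>r\<in>{..<m}. measure M (\<Union>i\<in>{..<d}. BW1 r i 1 \<union> BW1 r i (-1)))"
      unfolding BW_def using BW1s by (intro measure_UNION_le) auto
    also have "\<dots> \<le> (\<Sum>r\<in>{..<m}. real d * (2 * exp (- real m / 2)))"
    proof (intro sum_mono)
      fix r assume r: "r \<in> {..<m}"
      have "measure M (\<Union>i\<in>{..<d}. BW1 r i 1 \<union> BW1 r i (-1)) \<le> (\<Sum>i\<in>{..<d}. measure M (BW1 r i 1 \<union> BW1 r i (-1)))"
        using BW1s by (intro measure_UNION_le) auto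
      also have "\<dots> \<le> (\<Sum>i\<in>{..<d}. 2 * exp (- real m / 2))"
      proof (intro sum_mono)
        fix i assume i: "i \<in> {..<d}"
        have "measure M (BW1 r i 1 \<union> BW1 r i (-1)) \<le> measure M (BW1 r i 1) + measure M (BW1 r i (-1))"
          using BW1s by (intro measure_Un_le) auto
        also have "\<dots> \<le> exp (- real m / 2) + exp (- real m / 2)"
          using r i by (intro add_mono mBW1) auto
        finally show "measure M (BW1 r i 1 \<union> BW1 r i (-1)) \<le> 2 * exp (- real m / 2)" by simp
      qed
      also have "\<dots> = real d * (2 * exp (- real m / 2))" by simp
      finally show "measure M (\<Union>i\<in>{..<d}. BW1 r i 1 \<union> BW1 r i (-1)) \<le> real d * (2 * exp (- real m / 2))" .
    qed
    also have "\<dots> = real m * (real d * (2 * exp (- real m / 2)))" by simp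
    finally show ?thesis .
  qed
  have yG: "(\<Sum>i<d. (y i)\<^sup>2) \<le> 4" if "y \<in> G" for y using that unfolding G_def Grid_def by auto
  have t1_0: "0 \<le> t1" by (simp add: t1_def)
  have mBT1: "measure M (BT1 y \<sigma>) \<le> exp (- 10 * real m powr (1/3))" if "y \<in> G" "\<sigma> = 1 \<or> \<sigma> = -1" for y \<sigma>
  proof -
    have "emeasure M (BT1 y \<sigma>) \<le> ennreal (exp (- (t1\<^sup>2 * real m powr (2/3)) / 10))"
      unfolding BT1_def M_def by (rule bad_T[OF m0 yG[OF that(1)] t1_0 that(2)])
    also have "- (t1\<^sup>2 * real m powr (2/3)) / 10 = - 10 * real m powr (1/3)"
      using pw3[OF m] unfolding t1_def by simp
    finally show ?thesis by (intro meas_from_emeas[OF P.prob_space_axioms]) auto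
  qed
  have mBT: "measure M BT \<le> real (card G) * (2 * exp (- 10 * real m powr (1/3)))"
  proof -
    have "measure M BT \<le> (\<Sum>y\<in>G. measure M (BT1 y 1 \<union> BT1 y (-1)))"
      unfolding BT_def using BT1s Gfin by (intro measure_UNION_le) auto
    also have "\<dots> \<le> (\<Sum>y\<in>G. 2 * exp (- 10 * real m powr (1/3)))"
    proof (intro sum_mono)
      fix y assume y: "y \<in> G"
      have "measure M (BT1 y 1 \<union> BT1 y (-1)) \<le> measure M (BT1 y 1) + measure M (BT1 y (-1))"
        using BT1s by (intro measure_Un_le) auto
      also have "\<dots> \<le> exp (- 10 * real m powr (1/3)) + exp (- 10 * real m powr (1/3))"
        using y by (intro add_mono mBT1) auto
      finally show "measure M (BT1 y 1 \<union> BT1 y (-1)) \<le> 2 * exp (- 10 * real m powr (1/3))" by simp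
    qed
    also have "\<dots> = real (card G) * (2 * exp (- 10 * real m powr (1/3)))" by simp
    finally show ?thesis .
  qed
  have mBN1: "measure M (BN1 y) \<le> exp (- (real m powr (5/6)))" for y
  proof -
    have rho0: "0 \<le> 2 * \<rho>" using R by (simp add: \<rho>_def)
    have "emeasure M (BN1 y) \<le> ennreal (exp (- t2 + 2 * (2 * \<rho>) * real m * sqrt m))"
      unfolding BN1_def M_def by (rule bad_N[OF m0 rho0])
    also have "- t2 + 2 * (2 * \<rho>) * real m * sqrt m = - R * real m powr (5/6)"
      using pw4[OF m, of R] unfolding t2_def \<rho>_def by simp
    also have "ennreal (exp (- R * real m powr (5/6))) \<le> ennreal (exp (- (real m powr (5/6))))"
    proof (intro ennreal_leI)
      have "1 * real m powr (5/6) \<le> R * real m powr (5/6)" using R by (intro mult_right_mono) auto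
      then have "real m powr (5/6) \<le> R * real m powr (5/6)" by simp
      then show "exp (- R * real m powr (5/6)) \<le> exp (- (real m powr (5/6)))" by simp
    qed
    finally show ?thesis by (intro meas_from_emeas[OF P.prob_space_axioms]) auto
  qed
  have mBN: "measure M BN \<le> real (card G) * exp (- (real m powr (5/6)))"
  proof -
    have "measure M BN \<le> (\<Sum>y\<in>G. measure M (BN1 y))"
      unfolding BN_def using BN1s Gfin by (intro measure_UNION_le) auto
    also have "\<dots> \<le> (\<Sum>y\<in>G. exp (- (real m powr (5/6))))" by (intro sum_mono mBN1)
    also have "\<dots> = real (card G) * exp (- (real m powr (5/6)))" by simp
    finally show ?thesis .
  qed
  define z where "z = real m powr (1/12)"
  have z12: "z^12 = real m" unfolding z_def using m0 by (simp add: zpow)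
  have z4: "z^4 = real m powr (1/3)" unfolding z_def using m0 by (simp add: zpow)
  have z10: "z^10 = real m powr (5/6)" unfolding z_def using m0 by (simp add: zpow)
  have z0: "0 \<le> z" by (simp add: z_def)
  have dz: "real d \<le> z"
  proof (rule ccontr)
    assume "\<not> real d \<le> z"
    then have "z < real d" by simp
    then have "z^12 < (real d)^12" using z0 by (intro power_strict_mono) auto
    then have "real m < (real d)^12" using z12 by simp
    moreover have "(real d)^12 \<le> 16 * (real d)^12" by simp
    ultimately show False using mC by linarith
  qed
  have z2: "2 \<le> z" using dz d by linarith
  have cardG: "real (card G) \<le> (2 * real d * z^12 + 1)^d"
  proof -
    have "card G \<le> (2*d*m+1)^d" unfolding G_def by (rule Grid_card)
    then have "real (card G) \<le> real ((2*d*m+1)^d)" by (simp only: of_nat_le_iff)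
    also have "\<dots> = (2 * real d * z^12 + 1)^d" using z12 by (simp add: add.commute)
    finally show ?thesis .
  qed
  have total: "real m * (real d * (2 * exp (- real m / 2))) + real (card G) * (2 * exp (- 10 * real m powr (1/3)))
      + real (card G) * exp (- (real m powr (5/6))) \<le> exp (- (real m powr (1/3)))"
  proof -
    have ex0: "0 \<le> 2 * exp (- 10 * z^4) + exp (-(z^10))" by simp
    have "real (card G) * (2 * exp (- 10 * real m powr (1/3))) + real (card G) * exp (- (real m powr (5/6)))
        = real (card G) * (2 * exp (- 10 * z^4) + exp (-(z^10)))"
      unfolding z4 z10 by (simp add: algebra_simps)
    also have "\<dots> \<le> (2 * real d * z^12 + 1)^d * (2 * exp (- 10 * z^4) + exp (-(z^10)))"
      using cardG ex0 by (rule mult_right_mono)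
    finally have A: "real (card G) * (2 * exp (- 10 * real m powr (1/3))) + real (card G) * exp (- (real m powr (5/6)))
        \<le> (2 * real d * z^12 + 1)^d * (2 * exp (- 10 * z^4) + exp (-(z^10)))" .
    have B: "real m * (real d * (2 * exp (- real m / 2))) = 2 * z^12 * real d * exp (-(z^12)/2)"
      unfolding z12 by (simp add: algebra_simps)
    have "2 * z^12 * real d * exp (-(z^12)/2) + (2 * real d * z^12 + 1)^d * (2*exp (-10*z^4) + exp (-(z^10))) \<le> exp (-(z^4))"
      by (rule NUM[OF z2 refl dz])
    then show ?thesis using A B unfolding z4 by linarith
  qed
  have mE: "measure M E \<ge> 1 - exp (- 1 * real m powr (1/3))"
  proof -
    have "measure M (space M - E) \<le> measure M (BA \<union> BW \<union> BT \<union> BN)"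
      using sub BAs BWs BTs BNs by (intro P.finite_measure_mono) auto
    also have "\<dots> \<le> measure M BA + measure M BW + measure M BT + measure M BN"
    proof -
      have "measure M (BA \<union> BW \<union> BT \<union> BN) \<le> measure M (BA \<union> BW \<union> BT) + measure M BN"
        using BAs BWs BTs BNs by (intro measure_Un_le) auto
      moreover have "measure M (BA \<union> BW \<union> BT) \<le> measure M (BA \<union> BW) + measure M BT"
        using BAs BWs BTs by (intro measure_Un_le) auto
      moreover have "measure M (BA \<union> BW) \<le> measure M BA + measure M BW"
        using BAs BWs by (intro measure_Un_le) auto
      ultimately show ?thesis by linarith
    qed
    also have "\<dots> \<le> exp (- (real m powr (1/3)))" using mBA mBW mBT mBN total by linarith
    finally have c: "measure M (space M - E) \<le> exp (- (real m powr (1/3)))" .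
    have "measure M (space M - E) = 1 - measure M E" using P.prob_compl[OF Esets] .
    then show ?thesis using c by simp
  qed
  have det: "\<bar>fnet m d a0 b0 W x - gnet m d a0 b0 W0 W x\<bar> \<le> 16 * R\<^sup>2 / real m powr (1/6)"
    if w: "(a0, W0, b0) \<in> E" and HWn: "norm_2inf m d (\<lambda>r i. W r i - W0 r i) \<le> R / real m powr (2/3)"
      and x: "x \<in> Xset d" for a0 W0 b0 W x
  proof -
    have Ha: "\<forall>r<m. \<bar>a0 r\<bar> = real m powr (-1/3)" using w unfolding E_def s_def by auto
    have HW: "\<forall>r<m. \<forall>i<d. \<bar>W0 r i\<bar> < 1" using w unfolding E_def by auto
    have HT: "\<forall>y\<in>Grid d m. \<bar>Tf m d y (a0, W0, b0)\<bar> < t1" using w unfolding E_def G_def by auto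
    have HN: "\<forall>y\<in>Grid d m. Nf m d y (2 * (R / real m powr (2/3))) (a0, W0, b0) < t2"
      using w unfolding E_def G_def \<rho>_def by auto
    have "\<bar>fnet m d a0 b0 W x - gnet m d a0 b0 W0 W x\<bar>
       \<le> t1 + real m powr (-1/3) + real m powr (-1/3) * (R / real m powr (2/3)) * t2"
      by (rule det_bound[OF m R x Ha HW HT HN HWn])
    also have "\<dots> = 10 / real m powr (1/6) + real m powr (-1/3) + 5 * R\<^sup>2 / real m powr (1/6)"
      unfolding t1_def t2_def using pw1[OF m, of R] by simp
    also have "\<dots> \<le> 10 * R\<^sup>2 / real m powr (1/6) + R\<^sup>2 / real m powr (1/6) + 5 * R\<^sup>2 / real m powr (1/6)"
    proof -
      have R2: "1 \<le> R\<^sup>2" using R by (simp add: one_le_power)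
      have P0: "0 < real m powr (1/6)" using m0 by simp
      have "10 / real m powr (1/6) \<le> 10 * R\<^sup>2 / real m powr (1/6)"
        using R2 P0 by (intro divide_right_mono) auto
      moreover have "real m powr (-1/3) \<le> R\<^sup>2 / real m powr (1/6)"
        using pw2[OF m] R2 P0 by (meson divide_right_mono order.trans less_imp_le)
      ultimately show ?thesis by linarith
    qed
    also have "\<dots> = 16 * R\<^sup>2 / real m powr (1/6)" by (simp add: field_simps)
    finally show ?thesis .
  qed
  show ?thesis
  proof (rule bexI[of _ E], intro conjI)
    show "E \<in> sets (init_measure m d)" using Esets unfolding M_def .
    show "1 - exp (- 1 * real m powr (1/3)) \<le> measure (init_measure m d) E" using mE unfolding M_def .
    show "\<forall>(a0, W0, b0) \<in> E. \<forall>W :: nat \<Rightarrow> nat \<Rightarrow> real.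
           norm_2inf m d (\<lambda>r i. W r i - W0 r i) \<le> R / real m powr (2/3) \<longrightarrow>
           (\<forall>x \<in> Xset d. \<bar>fnet m d a0 b0 W x - gnet m d a0 b0 W0 W x\<bar> \<le> 16 * R\<^sup>2 / real m powr (1/6))"
      using det by auto
  qed
qed

lemma Xset_small: "d \<le> 1 \<Longrightarrow> Xset d = {}"
proof (rule ccontr)
  assume d: "d \<le> 1" and "Xset d \<noteq> {}"
  then obtain x where x: "x \<in> Xset d" by auto
  have "1 \<le> d" by (rule Xset_facts(3)[OF x])
  then have d1: "d = 1" using d by simp
  have "(\<Sum>i<d. (x i)\<^sup>2) = 1" by (rule Xset_facts(1)[OF x])
  then have "(x 0)\<^sup>2 = 1" using d1 by simp
  moreover have "x 0 = 1/2" using x d1 by (simp add: Xset_def)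
  ultimately show False by (simp add: power2_eq_square)
qed

theorem theorem2:
  shows "\<exists>C>0. \<exists>c>0. \<exists>k::nat. \<forall>(d::nat) (R::real) (m::nat).
     R \<ge> 1 \<and> m \<ge> 1 \<and> real m \<ge> C * real d ^ k \<longrightarrow>
     (\<exists>E \<in> sets (init_measure m d).
        measure (init_measure m d) E \<ge> 1 - exp (- c * real m powr (1/3)) \<and>
        (\<forall>(a0, W0, b0) \<in> E. \<forall>W :: nat \<Rightarrow> nat \<Rightarrow> real.
           norm_2inf m d (\<lambda>r i. W r i - W0 r i) \<le> R / real m powr (2/3) \<longrightarrow>
           (\<forall>x \<in> Xset d.
              \<bar>fnet m d a0 b0 W x - gnet m d a0 b0 W0 W x\<bar>
                \<le> C * R\<^sup>2 / real m powr (1/6))))"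
proof -
  have key: "\<forall>(d::nat) (R::real) (m::nat).
     R \<ge> 1 \<and> m \<ge> 1 \<and> real m \<ge> 16 * real d ^ 12 \<longrightarrow>
     (\<exists>E \<in> sets (init_measure m d).
        measure (init_measure m d) E \<ge> 1 - exp (- 1 * real m powr (1/3)) \<and>
        (\<forall>(a0, W0, b0) \<in> E. \<forall>W :: nat \<Rightarrow> nat \<Rightarrow> real.
           norm_2inf m d (\<lambda>r i. W r i - W0 r i) \<le> R / real m powr (2/3) \<longrightarrow>
           (\<forall>x \<in> Xset d.
              \<bar>fnet m d a0 b0 W x - gnet m d a0 b0 W0 W x\<bar>
                \<le> 16 * R\<^sup>2 / real m powr (1/6))))"
  proof (intro allI impI)
  fix d :: nat and R :: real and m :: nat
  assume H: "1 \<le> R \<and> 1 \<le> m \<and> 16 * real d ^ 12 \<le> real m"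
  show "\<exists>E \<in> sets (init_measure m d).
        measure (init_measure m d) E \<ge> 1 - exp (- 1 * real m powr (1/3)) \<and>
        (\<forall>(a0, W0, b0) \<in> E. \<forall>W :: nat \<Rightarrow> nat \<Rightarrow> real.
           norm_2inf m d (\<lambda>r i. W r i - W0 r i) \<le> R / real m powr (2/3) \<longrightarrow>
           (\<forall>x \<in> Xset d.
              \<bar>fnet m d a0 b0 W x - gnet m d a0 b0 W0 W x\<bar>
                \<le> 16 * R\<^sup>2 / real m powr (1/6)))"
  proof (cases "2 \<le> d")
    case True
    then show ?thesis using main_case[of d R m] H by auto
  next
    case False
    then have X: "Xset d = {}" by (intro Xset_small) auto
    have m0: "0 < m" using H by auto
    interpret P: prob_space "init_measure m d" by (rule prob_init[OF m0])
    show ?thesis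
    proof (rule bexI[of _ "space (init_measure m d)"], intro conjI)
      show "1 - exp (- 1 * real m powr (1/3)) \<le> measure (init_measure m d) (space (init_measure m d))"
        by (simp add: P.prob_space)
    qed (auto simp: X)
  qed
  qed
  show ?thesis
    by (rule exI[of _ "16::real"], rule conjI, simp, rule exI[of _ "1::real"], rule conjI, simp,
        rule exI[of _ "12::nat"], rule key)
qed

end
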